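(* Let $\alpha<\beta$ be real numbers, $T>0$, $v\in C^1(\mathbb{R})$, and let $\rho\in L^\infty(]0,T[\times]\alpha,\beta[)$ satisfy $$\int_0^T\!\!\int_\alpha^\beta\partial_t\phi\,|\rho-c|+\partial_x\phi\,\mathrm{sign}(\rho-c)[v(\rho)\rho-v(c)c]\,dx\,dt\ge0$$ for every $c\in\mathbb{R}$ and every nonnegative $\phi\in C^\infty_c(]0,T[\times]\alpha,\beta[)$. Then $$v(\rho)\rho(\cdot,\alpha^+)=-\mathrm{Tr}[v(\rho)\rho](\cdot,\alpha^+),\qquad v(\rho)\rho(\cdot,\beta^-)=\mathrm{Tr}[v(\rho)\rho](\cdot,\beta^-)\quad\text{a.e. on }]0,T[.$$
   Context: Strong traces: for $\rho$ as in the statement, with $f(\rho):=v(\rho)\rho$, there exist (Kwon–Vasseur, Panov) $\rho_\alpha,\rho_\beta\in L^\infty(]0,T[)$ such that $\operatorname{ess\,lim}_{y\to\alpha^+}\int_0^T|f(\rho)(t,y)-f(\rho_\alpha)(t)|\,dt=0$ and $\operatorname{ess\,lim}_{y\to\beta^-}\int_0^T|f(\rho)(t,y)-f(\rho_\beta)(t)|\,dt=0$; one writes $v(\rho)\rho(\cdot,\alpha^+):=f(\rho_\alpha)$ and $v(\rho)\rho(\cdot,\beta^-):=f(\rho_\beta)$. Distributional traces: taking $c$ below and above the range of $\rho$ shows $\int_0^T\!\int_\alpha^\beta\rho(\partial_t\phi+v(\rho)\partial_x\phi)\,dx\,dt=0$ for all $\phi\in C^\infty_c(]0,T[\times]\alpha,\beta[)$;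 for such functions there are unique $\mathrm{Tr}[v(\rho)\rho](\cdot,\alpha^+),\mathrm{Tr}[v(\rho)\rho](\cdot,\beta^-)\in L^\infty(]0,T[)$ and $[\rho]_0\in L^\infty(]\alpha,\beta[)$ such that $\int_0^T\!\int_\alpha^\beta\rho(\partial_t\varphi+v(\rho)\partial_x\varphi)\,dx\,dt=\int_0^T\varphi(t,\alpha)\mathrm{Tr}[v(\rho)\rho](t,\alpha^+)dt+\int_0^T\varphi(t,\beta)\mathrm{Tr}[v(\rho)\rho](t,\beta^-)dt-\int_\alpha^\beta[\rho]_0\varphi(0,\cdot)dx$ for all $\varphi\in C^\infty_c(]-\infty,T[\times\mathbb{R})$. *)

theory Defs
  imports "HOL-Analysis.Analysis"
begin

definition pdt :: "(real \<times> real \<Rightarrow> real) \<Rightarrow> real \<times> real \<Rightarrow> real" where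
  "pdt f z = deriv (\<lambda>s. f (s, snd z)) (fst z)"

definition pdx :: "(real \<times> real \<Rightarrow> real) \<Rightarrow> real \<times> real \<Rightarrow> real" where
  "pdx f z = deriv (\<lambda>y. f (fst z, y)) (snd z)"

fun pdiff :: "bool list \<Rightarrow> (real \<times> real \<Rightarrow> real) \<Rightarrow> real \<times> real \<Rightarrow> real" where
  "pdiff [] f = f"
| "pdiff (b # bs) f = (if b then pdt else pdx) (pdiff bs f)"

definition smooth2 :: "(real \<times> real \<Rightarrow> real) \<Rightarrow> bool" where
  "smooth2 f \<longleftrightarrow> (\<forall>ws z. pdiff ws f differentiable (at z))"

definition tsupport :: "(real \<times> real \<Rightarrow> real) \<Rightarrow> (real \<times> real) set" where
  "tsupport f = closure {z. f z \<noteq> 0}"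

text \<open>Test functions C-infinity with compact support in the open set U
  (extended by zero to the plane).\<close>

definition test_fun :: "(real \<times> real) set \<Rightarrow> (real \<times> real \<Rightarrow> real) \<Rightarrow> bool" where
  "test_fun U \<phi> \<longleftrightarrow> smooth2 \<phi> \<and> compact (tsupport \<phi>) \<and> tsupport \<phi> \<subseteq> U"

definition Linf_on :: "'a::euclidean_space set \<Rightarrow> ('a \<Rightarrow> real) \<Rightarrow> bool" where
  "Linf_on A g \<longleftrightarrow> g \<in> borel_measurable borel \<and>
     (\<exists>M. AE z in lborel. z \<in> A \<longrightarrow> \<bar>g z\<bar> \<le> M)"

definition entropy_sol :: "(real \<Rightarrow> real) \<Rightarrow> real \<Rightarrow> real \<Rightarrow> real \<Rightarrow> (real \<times> real \<Rightarrow> real) \<Rightarrow> bool" where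
  "entropy_sol v T a b \<rho> \<longleftrightarrow>
     (\<forall>c::real. \<forall>\<phi>. test_fun ({0<..<T} \<times> {a<..<b}) \<phi> \<and> (\<forall>z. 0 \<le> \<phi> z) \<longrightarrow>
        0 \<le> (LINT z:{0<..<T} \<times> {a<..<b}|lborel.
               pdt \<phi> z * \<bar>\<rho> z - c\<bar>
             + pdx \<phi> z * sgn (\<rho> z - c) * (v (\<rho> z) * \<rho> z - v c * c)))"

definition strong_trace_left :: "(real \<Rightarrow> real) \<Rightarrow> real \<Rightarrow> real \<Rightarrow> real \<Rightarrow> (real \<times> real \<Rightarrow> real) \<Rightarrow> (real \<Rightarrow> real) \<Rightarrow> bool" where
  "strong_trace_left v T a b \<rho> \<rho>a \<longleftrightarrow> Linf_on {0<..<T} \<rho>a \<and>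
     (\<forall>\<epsilon>>0. \<exists>\<delta>>0. AE y in lborel. a < y \<and> y < a + \<delta> \<and> y < b \<longrightarrow>
        (LINT t:{0<..<T}|lborel. \<bar>v (\<rho> (t, y)) * \<rho> (t, y) - v (\<rho>a t) * \<rho>a t\<bar>) < \<epsilon>)"

definition strong_trace_right :: "(real \<Rightarrow> real) \<Rightarrow> real \<Rightarrow> real \<Rightarrow> real \<Rightarrow> (real \<times> real \<Rightarrow> real) \<Rightarrow> (real \<Rightarrow> real) \<Rightarrow> bool" where
  "strong_trace_right v T a b \<rho> \<rho>b \<longleftrightarrow> Linf_on {0<..<T} \<rho>b \<and>
     (\<forall>\<epsilon>>0. \<exists>\<delta>>0. AE y in lborel. b - \<delta> < y \<and> y < b \<and> a < y \<longrightarrow>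
        (LINT t:{0<..<T}|lborel. \<bar>v (\<rho> (t, y)) * \<rho> (t, y) - v (\<rho>b t) * \<rho>b t\<bar>) < \<epsilon>)"

text \<open>Distributional (weak) traces Tr_a, Tr_b of v(\<rho>)\<rho> and initial trace \<rho>0.\<close>

definition weak_traces :: "(real \<Rightarrow> real) \<Rightarrow> real \<Rightarrow> real \<Rightarrow> real \<Rightarrow> (real \<times> real \<Rightarrow> real)
     \<Rightarrow> (real \<Rightarrow> real) \<Rightarrow> (real \<Rightarrow> real) \<Rightarrow> (real \<Rightarrow> real) \<Rightarrow> bool" where
  "weak_traces v T a b \<rho> Tra Trb \<rho>0 \<longleftrightarrow>
     Linf_on {0<..<T} Tra \<and> Linf_on {0<..<T} Trb \<and> Linf_on {a<..<b} \<rho>0 \<and>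
     (\<forall>\<phi>. test_fun ({..<T} \<times> UNIV) \<phi> \<longrightarrow>
        (LINT z:{0<..<T} \<times> {a<..<b}|lborel. \<rho> z * (pdt \<phi> z + v (\<rho> z) * pdx \<phi> z))
        = (LINT t:{0<..<T}|lborel. \<phi> (t, a) * Tra t)
        + (LINT t:{0<..<T}|lborel. \<phi> (t, b) * Trb t)
        - (LINT x:{a<..<b}|lborel. \<rho>0 x * \<phi> (0, x)))"

end

theory Submission
  imports Defs
begin


fun sm :: "nat \<Rightarrow> (real \<Rightarrow> real) \<Rightarrow> bool" where
  "sm 0 f = (\<forall>x. f differentiable (at x))"
| "sm (Suc n) f = ((\<forall>x. f differentiable (at x)) \<and> sm n (deriv f))"

definition smooth1 :: "(real \<Rightarrow> real) \<Rightarrow> bool" where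
  "smooth1 f \<longleftrightarrow> (\<forall>n. sm n f)"

lemma sm_diff: "sm n f \<Longrightarrow> f differentiable (at x)"
  by (cases n) auto

lemma sm_DERIV: "sm n f \<Longrightarrow> (f has_real_derivative deriv f x) (at x)"
  using sm_diff DERIV_deriv_iff_real_differentiable by blast

lemma sm_Suc_imp: "sm (Suc n) f \<Longrightarrow> sm n f"
proof (induction n arbitrary: f)
  case 0 then show ?case by simp
next
  case (Suc n) then show ?case by simp
qed

lemma deriv_eqI: "(\<And>x. (f has_real_derivative f' x) (at x)) \<Longrightarrow> deriv f = f'"
  by (rule ext) (rule DERIV_imp_deriv)

lemma sm_const: "sm n (\<lambda>x. c)"
proof (induction n arbitrary: c)
  case 0 then show ?case by simp
next
  case (Suc n)
  have "deriv (\<lambda>x::real. c) = (\<lambda>x. 0)" by (rule deriv_eqI) auto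
  then show ?case using Suc by simp
qed

lemma sm_id: "sm n (\<lambda>x. x)"
proof (cases n)
  case 0 then show ?thesis by simp
next
  case (Suc m)
  have "deriv (\<lambda>x::real. x) = (\<lambda>x. 1)" by (rule deriv_eqI) auto
  then show ?thesis using Suc sm_const by simp
qed

lemma sm_add: "sm n f \<Longrightarrow> sm n g \<Longrightarrow> sm n (\<lambda>x. f x + g x)"
proof (induction n arbitrary: f g)
  case 0 then show ?case by (simp add: differentiable_add)
next
  case (Suc n)
  have "deriv (\<lambda>x. f x + g x) = (\<lambda>x. deriv f x + deriv g x)"
    by (rule deriv_eqI) (intro DERIV_add sm_DERIV[OF Suc.prems(1)] sm_DERIV[OF Suc.prems(2)])
  then show ?case using Suc by (simp add: differentiable_add)
qed

lemma sm_mult: "sm n f \<Longrightarrow> sm n g \<Longrightarrow> sm n (\<lambda>x. f x * g x)"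
proof (induction n arbitrary: f g)
  case 0 then show ?case by (simp add: differentiable_mult)
next
  case (Suc n)
  have "deriv (\<lambda>x. f x * g x) = (\<lambda>x. deriv f x * g x + deriv g x * f x)"
    by (rule deriv_eqI) (intro DERIV_mult sm_DERIV[OF Suc.prems(1)] sm_DERIV[OF Suc.prems(2)])
  moreover have "sm n (\<lambda>x. deriv f x * g x + deriv g x * f x)"
    using Suc.prems sm_Suc_imp[OF Suc.prems(1)] sm_Suc_imp[OF Suc.prems(2)] by (intro sm_add Suc.IH) auto
  ultimately show ?case using Suc by (simp add: differentiable_mult)
qed

lemma sm_cmult: "sm n f \<Longrightarrow> sm n (\<lambda>x. c * f x)"
  using sm_mult[OF sm_const] by blast

lemma sm_affine: "sm n f \<Longrightarrow> sm n (\<lambda>x. f (a * x + b))"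
proof (induction n arbitrary: f)
  case 0
  have "(\<lambda>x. a * x + b) differentiable (at x)" for x
    by (simp add: differentiable_add differentiable_mult)
  then show ?case using 0
    by (simp add: differentiable_compose[where f=f])
next
  case (Suc n)
  have "deriv (\<lambda>x. f (a * x + b)) = (\<lambda>x. a * deriv f (a * x + b))"
  proof (rule deriv_eqI)
    fix x
    have "((\<lambda>x. a * x + b) has_real_derivative a) (at x)"
      by (auto intro!: derivative_eq_intros)
    from DERIV_chain2[OF sm_DERIV[OF Suc.prems] this]
    show "((\<lambda>x. f (a * x + b)) has_real_derivative a * deriv f (a * x + b)) (at x)"
      by (simp add: mult.commute)
  qed
  moreover have "sm n (\<lambda>x. a * deriv f (a * x + b))"
    using Suc by (intro sm_cmult Suc.IH) auto
  moreover have "(\<lambda>x. f (a * x + b)) differentiable (at x)" for x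
  proof -
    have "(\<lambda>x. a * x + b) differentiable (at x)"
      by (simp add: differentiable_add differentiable_mult)
    then show ?thesis using Suc.prems by (simp add: differentiable_compose[where f=f])
  qed
  ultimately show ?case by simp
qed

lemma sm_inverse: "sm n f \<Longrightarrow> (\<And>x. f x \<noteq> 0) \<Longrightarrow> sm n (\<lambda>x. inverse (f x))"
proof (induction n arbitrary: f)
  case 0
  then show ?case
    by (simp add: differentiable_inverse)
next
  case (Suc n)
  have D: "((\<lambda>x. inverse (f x)) has_real_derivative - deriv f x * (inverse (f x) * inverse (f x))) (at x)" for x
    using DERIV_inverse_fun[OF sm_DERIV[OF Suc.prems(1)] Suc.prems(2)]
    by (simp add: power2_eq_square)
  have "deriv (\<lambda>x. inverse (f x)) = (\<lambda>x. - deriv f x * (inverse (f x) * inverse (f x)))"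
    by (rule deriv_eqI) (rule D)
  moreover have "sm n (\<lambda>x. - deriv f x * (inverse (f x) * inverse (f x)))"
  proof -
    have a: "sm n (\<lambda>x. inverse (f x))" using Suc.IH[OF sm_Suc_imp[OF Suc.prems(1)] Suc.prems(2)] .
    have "sm n (\<lambda>x. (-1) * deriv f x)" using Suc.prems by (intro sm_cmult) auto
    then have "sm n (\<lambda>x. ((-1) * deriv f x) * (inverse (f x) * inverse (f x)))"
      using sm_mult[OF _ sm_mult[OF a a]] by blast
    then show ?thesis by simp
  qed
  moreover have "(\<lambda>x. inverse (f x)) differentiable (at x)" for x
    using D real_differentiable_def by blast
  ultimately show ?case by simp
qed

lemma sm_deriv_funpow: "sm n f \<Longrightarrow> k \<le> n \<Longrightarrow> (deriv ^^ k) f differentiable (at x)"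
proof (induction k arbitrary: n f)
  case 0 then show ?case by (simp add: sm_diff)
next
  case (Suc k)
  then obtain m where m: "n = Suc m" by (cases n) auto
  with Suc.prems have "sm m (deriv f)" "k \<le> m" by auto
  from Suc.IH[OF this] show ?case by (simp add: funpow_Suc_right del: funpow.simps)
qed

lemma smooth1_deriv_funpow: "smooth1 f \<Longrightarrow> (deriv ^^ k) f differentiable (at x)"
  unfolding smooth1_def using sm_deriv_funpow by blast

lemma smooth1_deriv: "smooth1 f \<Longrightarrow> smooth1 (deriv f)"
  unfolding smooth1_def by (metis sm.simps(2))


inductive pf :: "(real \<Rightarrow> real) \<Rightarrow> bool" where
  pf_const: "pf (\<lambda>s. c)"
| pf_id: "pf (\<lambda>s. s)"
| pf_add: "pf p \<Longrightarrow> pf q \<Longrightarrow> pf (\<lambda>s. p s + q s)"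
| pf_mult: "pf p \<Longrightarrow> pf q \<Longrightarrow> pf (\<lambda>s. p s * q s)"

lemma pf_deriv: "pf p \<Longrightarrow> \<exists>p'. pf p' \<and> (\<forall>s. (p has_real_derivative p' s) (at s))"
proof (induction rule: pf.induct)
  case (pf_const c) then show ?case by (intro exI[of _ "\<lambda>s. 0"]) (auto intro: pf.intros)
next
  case pf_id then show ?case by (intro exI[of _ "\<lambda>s. 1"]) (auto intro: pf.intros)
next
  case (pf_add p q)
  then obtain p' q' where "pf p'" "pf q'" "\<And>s. (p has_real_derivative p' s) (at s)"
    "\<And>s. (q has_real_derivative q' s) (at s)" by blast
  then show ?case by (intro exI[of _ "\<lambda>s. p' s + q' s"]) (auto intro: pf.intros DERIV_add)
next
  case (pf_mult p q)
  then obtain p' q' where "pf p'" "pf q'" "\<And>s. (p has_real_derivative p' s) (at s)"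
    "\<And>s. (q has_real_derivative q' s) (at s)" by blast
  then show ?case
    using pf_mult.hyps by (intro exI[of _ "\<lambda>s. p' s * q s + q' s * p s"]) (auto intro!: pf.intros DERIV_mult)
qed

lemma pf_bound: "pf p \<Longrightarrow> \<exists>C k. 0 \<le> C \<and> (\<forall>s\<ge>1. \<bar>p s\<bar> \<le> C * s ^ k)"
proof (induction rule: pf.induct)
  case (pf_const c) then show ?case by (intro exI[of _ "\<bar>c\<bar>"] exI[of _ 0]) auto
next
  case pf_id then show ?case by (intro exI[of _ 1] exI[of _ 1]) auto
next
  case (pf_add p q)
  then obtain C1 k1 C2 k2 where c: "0 \<le> C1" "\<forall>s\<ge>1. \<bar>p s\<bar> \<le> C1 * s ^ k1"
    "0 \<le> C2" "\<forall>s\<ge>1. \<bar>q s\<bar> \<le> C2 * s ^ k2" by blast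
  have "\<bar>p s + q s\<bar> \<le> (C1 + C2) * s ^ (k1 + k2)" if "s \<ge> 1" for s
  proof -
    have "s ^ k1 \<le> s ^ (k1 + k2)" "s ^ k2 \<le> s ^ (k1 + k2)"
      using that by (auto intro: power_increasing)
    then have "C1 * s ^ k1 \<le> C1 * s ^ (k1 + k2)" "C2 * s ^ k2 \<le> C2 * s ^ (k1 + k2)"
      using c by (auto intro: mult_left_mono)
    moreover have "\<bar>p s\<bar> \<le> C1 * s ^ k1" "\<bar>q s\<bar> \<le> C2 * s ^ k2" using c that by auto
    ultimately show ?thesis using abs_triangle_ineq[of "p s" "q s"] by (simp add: algebra_simps)
  qed
  then show ?case using c by (intro exI[of _ "C1 + C2"] exI[of _ "k1 + k2"]) auto
next
  case (pf_mult p q)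
  then obtain C1 k1 C2 k2 where c: "0 \<le> C1" "\<forall>s\<ge>1. \<bar>p s\<bar> \<le> C1 * s ^ k1"
    "0 \<le> C2" "\<forall>s\<ge>1. \<bar>q s\<bar> \<le> C2 * s ^ k2" by blast
  have "\<bar>p s * q s\<bar> \<le> (C1 * C2) * s ^ (k1 + k2)" if "s \<ge> 1" for s
  proof -
    have "\<bar>p s * q s\<bar> = \<bar>p s\<bar> * \<bar>q s\<bar>" by (simp add: abs_mult)
    also have "\<dots> \<le> (C1 * s ^ k1) * (C2 * s ^ k2)"
      using c that by (intro mult_mono) auto
    finally show ?thesis by (simp add: power_add algebra_simps)
  qed
  then show ?case using c by (intro exI[of _ "C1 * C2"] exI[of _ "k1 + k2"]) auto
qed

lemma pf_lim: "pf p \<Longrightarrow> ((\<lambda>s. p s * exp (- s)) \<longlongrightarrow> 0) at_top"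
proof -
  assume "pf p"
  from pf_bound[OF this] obtain C k where c: "0 \<le> C" "\<forall>s\<ge>1. \<bar>p s\<bar> \<le> C * s ^ k" by blast
  have l: "((\<lambda>s. C * (s ^ k / exp s)) \<longlongrightarrow> 0) at_top"
    using tendsto_mult[OF tendsto_const[of C] tendsto_power_div_exp_0[of k]] by simp
  have "eventually (\<lambda>s. norm (p s * exp (- s)) \<le> C * (s ^ k / exp s)) at_top"
    using eventually_ge_at_top[of "1::real"]
  proof eventually_elim
    case (elim s)
    have "norm (p s * exp (- s)) = \<bar>p s\<bar> / exp s" by (simp add: exp_minus field_simps)
    also have "\<dots> \<le> C * s ^ k / exp s" using c elim by (intro divide_right_mono) auto
    finally show ?case by simp
  qed
  from Lim_null_comparison[OF this l] show ?thesis .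
qed

definition Hq :: "(real \<Rightarrow> real) \<Rightarrow> real \<Rightarrow> real" where
  "Hq q x = (if 0 < x then q (inverse x) * exp (- inverse x) else 0)"

lemma Hq_deriv:
  assumes q: "pf q" and q': "\<And>s. (q has_real_derivative q' s) (at s)"
  shows "(Hq q has_real_derivative Hq (\<lambda>s. s * s * (q s + (-1) * q' s)) x) (at x)"
proof (cases "x = 0")
  case True
  have R: "((\<lambda>y. Hq q y / y) \<longlongrightarrow> 0) (at_right 0)"
  proof -
    have "pf (\<lambda>s. s * q s)" using q by (intro pf.intros)
    from pf_lim[OF this]
    have "((\<lambda>s. s * q s * exp (- s)) \<longlongrightarrow> 0) at_top" .
    from filterlim_compose[OF this filterlim_inverse_at_top_right]
    have "((\<lambda>y. inverse y * q (inverse y) * exp (- inverse y)) \<longlongrightarrow> 0) (at_right 0)" .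
    moreover have "eventually (\<lambda>y. inverse y * q (inverse y) * exp (- inverse y) = Hq q y / y) (at_right (0::real))"
      using eventually_at_right_less[of "0::real"]
      by eventually_elim (auto simp: Hq_def divide_inverse)
    ultimately show ?thesis by (rule Lim_transform_eventually)
  qed
  have L: "((\<lambda>y. Hq q y / y) \<longlongrightarrow> 0) (at_left 0)"
  proof -
    have "eventually (\<lambda>y. 0 = Hq q y / y) (at_left (0::real))"
      using eventually_at_left_real[of "-1" "0::real", OF neg_less_0_iff_less[THEN iffD2, OF zero_less_one]]
      by eventually_elim (auto simp: Hq_def)
    then show ?thesis by (rule Lim_transform_eventually[OF tendsto_const])
  qed
  have "((\<lambda>y. (Hq q y - Hq q 0) / (y - 0)) \<longlongrightarrow> 0) (at 0)"
    using filterlim_split_at[OF L R] by (simp add: Hq_def)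
  then show ?thesis using True by (simp add: has_field_derivative_iff Hq_def)
next
  case False
  show ?thesis
  proof (cases "x > 0")
    case True
    have i: "(inverse has_real_derivative - (inverse x * inverse x)) (at x)"
      using DERIV_inverse[of x] True by (simp add: power2_eq_square)
    have a: "((\<lambda>y. q (inverse y)) has_real_derivative q' (inverse x) * (- (inverse x * inverse x))) (at x)"
      by (rule DERIV_chain2[OF q' i])
    have b: "((\<lambda>y. exp (- inverse y)) has_real_derivative exp (- inverse x) * (inverse x * inverse x)) (at x)"
      using DERIV_chain2[OF DERIV_exp DERIV_minus[OF i]] by simp
    have "((\<lambda>y. q (inverse y) * exp (- inverse y)) has_real_derivative
       Hq (\<lambda>s. s * s * (q s + (-1) * q' s)) x) (at x)"
      using DERIV_mult[OF a b] True by (simp add: Hq_def algebra_simps)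
    then show ?thesis
      by (rule has_field_derivative_transform_within_open[where S="{0<..}"]) (use True in \<open>auto simp: Hq_def\<close>)
  next
    case False
    with \<open>x \<noteq> 0\<close> have "x < 0" by simp
    have "((\<lambda>y. 0) has_real_derivative Hq (\<lambda>s. s * s * (q s + (-1) * q' s)) x) (at x)"
      using \<open>x < 0\<close> by (simp add: Hq_def)
    then show ?thesis
      by (rule has_field_derivative_transform_within_open[where S="{..<0}"]) (use \<open>x < 0\<close> in \<open>auto simp: Hq_def\<close>)
  qed
qed

lemma Hq_sm: "pf q \<Longrightarrow> sm n (Hq q)"
proof (induction n arbitrary: q)
  case 0
  from pf_deriv[OF 0] obtain q' where "\<And>s. (q has_real_derivative q' s) (at s)" by blast
  from Hq_deriv[OF 0 this] show ?case
    using real_differentiable_def sm.simps(1) by blast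
next
  case (Suc n)
  from pf_deriv[OF Suc.prems] obtain q' where q': "pf q'" "\<And>s. (q has_real_derivative q' s) (at s)" by blast
  have D: "(Hq q has_real_derivative Hq (\<lambda>s. s * s * (q s + (-1) * q' s)) x) (at x)" for x
    using Hq_deriv[OF Suc.prems q'(2)] .
  have "deriv (Hq q) = Hq (\<lambda>s. s * s * (q s + (-1) * q' s))" by (rule deriv_eqI) (rule D)
  moreover have "pf (\<lambda>s. s * s * (q s + (-1) * q' s))"
    using Suc.prems q' by (intro pf.intros)
  moreover have "Hq q differentiable (at x)" for x
    using D real_differentiable_def by blast
  ultimately show ?case using Suc.IH by simp
qed

definition hb :: "real \<Rightarrow> real" where "hb = Hq (\<lambda>s. 1)"

lemma hb_sm: "sm n hb"
  unfolding hb_def by (intro Hq_sm pf.intros)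

lemma hb_le0: "x \<le> 0 \<Longrightarrow> hb x = 0" by (simp add: hb_def Hq_def)
lemma hb_pos: "x > 0 \<Longrightarrow> hb x > 0" by (simp add: hb_def Hq_def)
lemma hb_nonneg: "hb x \<ge> 0" by (simp add: hb_def Hq_def)

definition eta :: "real \<Rightarrow> real" where
  "eta x = hb (1 - x) * inverse (hb (1 - x) + hb x)"

lemma eta_den: "hb (1 - x) + hb x > 0"
proof (cases "x > 0")
  case True then show ?thesis using hb_pos[of x] hb_nonneg[of "1-x"] by simp
next
  case False then show ?thesis using hb_pos[of "1-x"] hb_nonneg[of x] by simp
qed

lemma eta_sm: "sm n eta"
proof -
  have a: "sm n (\<lambda>x. hb ((-1) * x + 1))" by (rule sm_affine[OF hb_sm])
  have b: "sm n (\<lambda>x. hb ((-1) * x + 1) + hb x)" by (rule sm_add[OF a hb_sm])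
  have c: "sm n (\<lambda>x. inverse (hb ((-1) * x + 1) + hb x))"
    using eta_den by (intro sm_inverse[OF b]) (metis add.commute less_irrefl uminus_add_conv_diff mult_minus1)
  have "sm n (\<lambda>x. hb ((-1) * x + 1) * inverse (hb ((-1) * x + 1) + hb x))" by (rule sm_mult[OF a c])
  then show ?thesis unfolding eta_def[abs_def] by simp
qed

lemma eta_smooth: "smooth1 eta" using eta_sm smooth1_def by blast

lemma eta_le0: "x \<le> 0 \<Longrightarrow> eta x = 1"
  using eta_den[of x] by (simp add: eta_def hb_le0)
lemma eta_ge1: "x \<ge> 1 \<Longrightarrow> eta x = 0"
  by (simp add: eta_def hb_le0)
lemma eta_nonneg: "eta x \<ge> 0"
  using eta_den[of x] hb_nonneg[of "1-x"] by (simp add: eta_def)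
lemma eta_le1: "eta x \<le> 1"
  using eta_den[of x] hb_nonneg[of "1-x"] hb_nonneg[of x] by (simp add: eta_def field_simps)


lemma deriv_locconst:
  fixes f :: "real \<Rightarrow> real" and c :: real
  assumes "open S" "x \<in> S" "\<And>y. y \<in> S \<Longrightarrow> f y = c"
  shows "deriv f x = 0"
proof -
  have "((\<lambda>y. c) has_real_derivative 0) (at x)" by simp
  then have "(f has_real_derivative 0) (at x)"
    by (rule has_field_derivative_transform_within_open[OF _ assms(1,2)]) (use assms(3) in auto)
  then show ?thesis by (rule DERIV_imp_deriv)
qed

lemma deriv_zero_outside:
  fixes f :: "real \<Rightarrow> real"
  assumes "\<And>t. t \<notin> {a..b} \<Longrightarrow> f t = 0" "x \<notin> {a..b}"
  shows "deriv f x = 0"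
proof (cases "x < a")
  case True
  then show ?thesis by (intro deriv_locconst[of "{..<a}"]) (use assms in auto)
next
  case False
  with assms have "x > b" by auto
  then show ?thesis by (intro deriv_locconst[of "{b<..}"]) (use assms in auto)
qed

lemma smooth1_cont: "smooth1 f \<Longrightarrow> continuous_on UNIV f"
  unfolding smooth1_def
  by (metis continuous_at_imp_continuous_on differentiable_imp_continuous_within sm_diff)

lemma cont_bound:
  fixes g :: "real \<Rightarrow> real"
  assumes "continuous_on UNIV g" "\<And>x. x \<notin> {a..b} \<Longrightarrow> g x = 0"
  shows "\<exists>B. \<forall>x. \<bar>g x\<bar> \<le> B"
proof -
  have "compact (g ` {a..b})"
    by (intro compact_continuous_image compact_Icc continuous_on_subset[OF assms(1)]) auto
  then obtain B where B: "\<And>y. y \<in> g ` {a..b} \<Longrightarrow> norm y \<le> B"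
    using compact_imp_bounded bounded_iff by metis
  have "\<bar>g x\<bar> \<le> max B 0" for x
    using B[of "g x"] assms(2)[of x] by (cases "x \<in> {a..b}") auto
  then show ?thesis by blast
qed

lemma eta_deriv_zero: "x \<notin> {0..1} \<Longrightarrow> deriv eta x = 0"
proof (cases "x < 0")
  case True
  then show ?thesis by (intro deriv_locconst[of "{..<0}" _ _ 1]) (auto intro: eta_le0)
next
  case False
  assume "x \<notin> {0..1}"
  with False have "x > 1" by auto
  then show ?thesis by (intro deriv_locconst[of "{1<..}" _ _ 0]) (auto intro: eta_ge1)
qed

lemma eta_deriv_bound: "\<exists>C. 0 < C \<and> (\<forall>x. \<bar>deriv eta x\<bar> \<le> C)"
proof -
  have "continuous_on UNIV (deriv eta)"
    using smooth1_cont[OF smooth1_deriv[OF eta_smooth]] .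
  from cont_bound[OF this eta_deriv_zero] obtain B where "\<forall>x. \<bar>deriv eta x\<bar> \<le> B" by blast
  then show ?thesis by (intro exI[of _ "max B 1"]) (auto intro: order.trans)
qed

lemma smooth1_mult: "smooth1 f \<Longrightarrow> smooth1 g \<Longrightarrow> smooth1 (\<lambda>x. f x * g x)"
  unfolding smooth1_def using sm_mult by blast
lemma smooth1_affine: "smooth1 f \<Longrightarrow> smooth1 (\<lambda>x. f (a * x + b))"
  unfolding smooth1_def using sm_affine by blast
lemma smooth1_const: "smooth1 (\<lambda>x. c)"
  unfolding smooth1_def using sm_const by blast
lemma smooth1_add: "smooth1 f \<Longrightarrow> smooth1 g \<Longrightarrow> smooth1 (\<lambda>x. f x + g x)"
  unfolding smooth1_def using sm_add by blast

lemma smooth1_eta_aff: "smooth1 (\<lambda>x. eta (a * x + b))"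
  by (rule smooth1_affine[OF eta_smooth])

lemma smooth1_oneminus_eta_aff: "smooth1 (\<lambda>x. 1 - eta (a * x + b))"
proof -
  have "smooth1 (\<lambda>x. 1 + (-1) * eta (a * x + b))"
    by (intro smooth1_add smooth1_const smooth1_mult smooth1_eta_aff)
  then show ?thesis by simp
qed

definition tens :: "(real \<Rightarrow> real) \<Rightarrow> (real \<Rightarrow> real) \<Rightarrow> real \<times> real \<Rightarrow> real" where
  "tens A B = (\<lambda>z. A (fst z) * B (snd z))"

lemma pdt_tens: "(\<And>x. A differentiable (at x)) \<Longrightarrow> pdt (tens A B) = tens (deriv A) B"
proof (rule ext)
  fix z :: "real \<times> real"
  assume d: "\<And>x. A differentiable (at x)"
  have "((\<lambda>s. A s * B (snd z)) has_real_derivative deriv A (fst z) * B (snd z)) (at (fst z))"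
    by (rule DERIV_cmult_right) (use d DERIV_deriv_iff_real_differentiable in blast)
  then show "pdt (tens A B) z = tens (deriv A) B z"
    unfolding pdt_def tens_def by (simp add: DERIV_imp_deriv)
qed

lemma pdx_tens: "(\<And>x. B differentiable (at x)) \<Longrightarrow> pdx (tens A B) = tens A (deriv B)"
proof (rule ext)
  fix z :: "real \<times> real"
  assume d: "\<And>x. B differentiable (at x)"
  have "((\<lambda>y. A (fst z) * B y) has_real_derivative A (fst z) * deriv B (snd z)) (at (snd z))"
    by (rule DERIV_cmult) (use d DERIV_deriv_iff_real_differentiable in blast)
  then show "pdx (tens A B) z = tens A (deriv B) z"
    unfolding pdx_def tens_def by (simp add: DERIV_imp_deriv)
qed

lemma smooth1_diff: "smooth1 f \<Longrightarrow> f differentiable (at x)"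
  unfolding smooth1_def using sm_diff by blast

lemma pdiff_tens:
  "smooth1 A \<Longrightarrow> smooth1 B \<Longrightarrow> \<exists>A' B'. smooth1 A' \<and> smooth1 B' \<and> pdiff ws (tens A B) = tens A' B'"
proof (induction ws)
  case Nil then show ?case by auto
next
  case (Cons b ws)
  then obtain A' B' where ab: "smooth1 A'" "smooth1 B'" "pdiff ws (tens A B) = tens A' B'" by blast
  show ?case
  proof (cases b)
    case True
    then show ?thesis using ab
      by (intro exI[of _ "deriv A'"] exI[of _ B']) (auto simp: pdt_tens smooth1_diff smooth1_deriv)
  next
    case False
    then show ?thesis using ab
      by (intro exI[of _ A'] exI[of _ "deriv B'"]) (auto simp: pdx_tens smooth1_diff smooth1_deriv)
  qed
qed

lemma tens_differentiable:
  assumes "smooth1 A" "smooth1 B"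
  shows "tens A B differentiable (at z)"
proof -
  have a: "(\<lambda>z::real\<times>real. A (fst z)) differentiable (at z)"
    by (rule differentiable_compose[where f=A]) (auto intro: smooth1_diff[OF assms(1)] bounded_linear_imp_differentiable bounded_linear_fst)
  have b: "(\<lambda>z::real\<times>real. B (snd z)) differentiable (at z)"
    by (rule differentiable_compose[where f=B]) (auto intro: smooth1_diff[OF assms(2)] bounded_linear_imp_differentiable bounded_linear_snd)
  show ?thesis unfolding tens_def using differentiable_mult[OF a b] by simp
qed

lemma smooth2_tens: "smooth1 A \<Longrightarrow> smooth1 B \<Longrightarrow> smooth2 (tens A B)"
  unfolding smooth2_def using pdiff_tens tens_differentiable by metis

lemma test_fun_tens:
  assumes "smooth1 A" "smooth1 B" "\<And>t. t \<notin> {c..d} \<Longrightarrow> A t = 0" "\<And>x. x \<notin> {e..f} \<Longrightarrow> B x = 0"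
    and "{c..d} \<times> {e..f} \<subseteq> U"
  shows "test_fun U (tens A B)"
proof -
  have sub: "{z. tens A B z \<noteq> 0} \<subseteq> {c..d} \<times> {e..f}"
    using assms(3,4) by (force simp: tens_def)
  have cl: "tsupport (tens A B) \<subseteq> {c..d} \<times> {e..f}"
    unfolding tsupport_def by (rule closure_minimal[OF sub]) (intro closed_Times closed_atLeastAtMost)
  have "bounded {z. tens A B z \<noteq> 0}"
    by (rule bounded_subset[OF compact_imp_bounded[OF compact_Times[OF compact_Icc compact_Icc]] sub])
  then have "compact (tsupport (tens A B))"
    unfolding tsupport_def using compact_closure by blast
  then show ?thesis
    unfolding test_fun_def using smooth2_tens[OF assms(1,2)] cl assms(5) by auto
qed


abbreviation PP :: "(real \<times> real) measure" where "PP \<equiv> lborel \<Otimes>\<^sub>M lborel"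

lemma lborel_pair_eq: "(lborel :: (real \<times> real) measure) = PP"
  by (simp add: lborel_prod)

lemma meas_pair_from_borel: "(g :: real \<times> real \<Rightarrow> real) \<in> borel_measurable borel \<Longrightarrow> g \<in> borel_measurable PP"
  by (simp add: lborel_prod)

lemma AE_fst_lift:
  assumes "AE t in lborel. P t"
  shows "AE z in PP. P (fst z)"
proof -
  from assms obtain N where N: "{t. \<not> P t} \<subseteq> N" "emeasure lborel N = 0" "N \<in> sets lborel"
    by (auto elim!: AE_E)
  have s: "N \<times> (UNIV::real set) \<in> sets PP" using N(3) by (intro pair_measureI) auto
  have "emeasure PP (N \<times> (UNIV::real set)) = 0"
    using N by (simp add: lborel.emeasure_pair_measure_Times)
  then have "N \<times> UNIV \<in> null_sets PP" using s by (auto simp: null_sets_def)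
  then show ?thesis by (rule AE_I') (use N(1) in auto)
qed

lemma integrable_bdd:
  fixes g :: "'a \<Rightarrow> real"
  assumes "g \<in> borel_measurable M" "S \<in> sets M" "emeasure M S < \<infinity>" "0 \<le> K"
     "AE z in M. \<bar>g z\<bar> \<le> K * indicator S z"
  shows "integrable M g"
proof (rule Bochner_Integration.integrable_bound[where f="\<lambda>z. K * indicator S z"])
  show "integrable M (\<lambda>z. K * indicator S z)" using assms by auto
  show "AE x in M. norm (g x) \<le> norm (K * indicator S x)"
    using assms(5) by eventually_elim (use assms(4) in \<open>auto split: split_indicator\<close>)
qed (use assms in auto)

lemma emeasure_box2: "a \<le> b \<Longrightarrow> c \<le> d \<Longrightarrow> emeasure PP ({a<..<b} \<times> {c<..<d}) = ennreal ((b - a) * (d - c))"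
  by (simp add: lborel.emeasure_pair_measure_Times ennreal_mult)

lemma cont_bound_interval:
  fixes g :: "real \<Rightarrow> real"
  assumes "continuous_on UNIV g" "0 \<le> R"
  shows "\<exists>B\<ge>0. \<forall>u. \<bar>u\<bar> \<le> R \<longrightarrow> \<bar>g u\<bar> \<le> B"
proof -
  have "compact (g ` {-R..R})"
    by (intro compact_continuous_image compact_Icc continuous_on_subset[OF assms(1)]) auto
  then obtain B where B: "\<And>y. y \<in> g ` {-R..R} \<Longrightarrow> norm y \<le> B"
    using compact_imp_bounded bounded_iff by metis
  have "\<forall>u. \<bar>u\<bar> \<le> R \<longrightarrow> \<bar>g u\<bar> \<le> max B 0"
    using B by (auto simp: abs_le_iff intro: le_max_iff_disj[THEN iffD2])
  then show ?thesis by (intro exI[of _ "max B 0"]) auto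
qed

context
  fixes \<alpha> \<beta> T M :: real and v :: "real \<Rightarrow> real" and \<rho> :: "real \<times> real \<Rightarrow> real"
  assumes ab: "\<alpha> < \<beta>" and Tpos: "0 < T" and vcont: "continuous_on UNIV v"
    and rho_meas: "\<rho> \<in> borel_measurable borel"
    and rho_bd: "AE z in lborel. z \<in> {0<..<T} \<times> {\<alpha><..<\<beta>} \<longrightarrow> \<bar>\<rho> z\<bar> \<le> M"
begin

lemma v_meas: "v \<in> borel_measurable borel"
  by (rule borel_measurable_continuous_onI[OF vcont])

lemma rho_meas2: "\<rho> \<in> borel_measurable PP"
  by (rule meas_pair_from_borel[OF rho_meas])

lemma rho_bd2: "AE z in PP. fst z \<in> {0<..<T} \<longrightarrow> snd z \<in> {\<alpha><..<\<beta>} \<longrightarrow> \<bar>\<rho> z\<bar> \<le> \<bar>M\<bar>"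
  using rho_bd unfolding lborel_pair_eq by eventually_elim (auto simp: mem_Times_iff)

lemma f_cont: "continuous_on UNIV (\<lambda>u. v u * u)"
  by (intro continuous_intros continuous_on_subset[OF vcont]) auto

lemma est:
  fixes \<psi> chi r :: "real \<Rightarrow> real" and a' b' K1 Ra \<Psi>0 \<Psi>1 \<delta> s :: real
  assumes \<psi>: "smooth1 \<psi>" "\<And>t. \<bar>\<psi> t\<bar> \<le> \<Psi>0" "\<And>t. \<bar>deriv \<psi> t\<bar> \<le> \<Psi>1"
    and chi: "smooth1 chi" "\<And>x. x \<in> {\<alpha><..<\<beta>} \<Longrightarrow> \<bar>chi x\<bar> \<le> 1"
       "\<And>x. x \<in> {\<alpha><..<\<beta>} \<Longrightarrow> \<bar>deriv chi x\<bar> \<le> K1"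
       "\<And>x. x \<in> {\<alpha><..<\<beta>} \<Longrightarrow> x \<notin> {a'<..<b'} \<Longrightarrow> chi x = 0 \<and> deriv chi x = 0"
       "(\<integral>x. indicator {\<alpha><..<\<beta>} x * deriv chi x \<partial>lborel) = s"
    and J: "\<alpha> \<le> a'" "a' \<le> b'" "b' \<le> \<beta>"
    and nn: "0 \<le> K1" "0 \<le> \<Psi>0" "0 \<le> \<Psi>1" "0 \<le> \<delta>" "0 \<le> Ra"
    and r: "r \<in> borel_measurable borel" "AE t in lborel. t \<in> {0<..<T} \<longrightarrow> \<bar>r t\<bar> \<le> Ra"
    and tr: "AE x in lborel. x \<in> {a'<..<b'} \<longrightarrow>
       (LINT t:{0<..<T}|lborel. \<bar>v (\<rho> (t, x)) * \<rho> (t, x) - v (r t) * r t\<bar>) < \<delta>"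
  shows "\<bar>(LINT z:{0<..<T} \<times> {\<alpha><..<\<beta>}|lborel. \<rho> z * (pdt (tens \<psi> chi) z + v (\<rho> z) * pdx (tens \<psi> chi) z))
          - s * (LINT t:{0<..<T}|lborel. \<psi> t * (v (r t) * r t))\<bar>
         \<le> \<bar>M\<bar> * \<Psi>1 * T * (b' - a') + \<Psi>0 * K1 * \<delta> * (b' - a')"
proof -
  have [measurable]: "v \<in> borel_measurable borel" by (rule v_meas)
  have [measurable]: "\<rho> \<in> borel_measurable PP" by (rule rho_meas2)
  define f where "f u = v u * u" for u
  have f_meas[measurable]: "f \<in> borel_measurable borel"
    unfolding f_def[abs_def] by measurable
  have [measurable]: "\<psi> \<in> borel_measurable borel" "chi \<in> borel_measurable borel"
    "deriv \<psi> \<in> borel_measurable borel" "deriv chi \<in> borel_measurable borel"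
    using \<psi>(1) chi(1) by (auto intro!: borel_measurable_continuous_onI smooth1_cont smooth1_deriv)
  have [measurable]: "r \<in> borel_measurable borel" using r(1) .
  have mx: "0 \<le> max \<bar>M\<bar> Ra" by (simp add: le_max_iff_disj)
  obtain Fb where Fb0: "0 \<le> Fb" and Fball: "\<forall>u. \<bar>u\<bar> \<le> max \<bar>M\<bar> Ra \<longrightarrow> \<bar>f u\<bar> \<le> Fb"
    using cont_bound_interval[OF f_cont mx] unfolding f_def by blast
  have Fb: "0 \<le> Fb" "\<And>u. \<bar>u\<bar> \<le> max \<bar>M\<bar> Ra \<Longrightarrow> \<bar>f u\<bar> \<le> Fb"
    using Fb0 Fball by auto
  have r2: "AE z in PP. fst z \<in> {0<..<T} \<longrightarrow> \<bar>r (fst z)\<bar> \<le> Ra"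
    using AE_fst_lift[OF r(2)] .
  let ?B = "{0<..<T} \<times> {\<alpha><..<\<beta>}"
  let ?J = "{a'<..<b'}"
  let ?w = "b' - a'"
  define h1 where "h1 z = indicator {0<..<T} (fst z) * indicator {\<alpha><..<\<beta>} (snd z) *
      (\<rho> z * deriv \<psi> (fst z) * chi (snd z))" for z
  define h2 where "h2 z = indicator {0<..<T} (fst z) * indicator {\<alpha><..<\<beta>} (snd z) *
      ((f (\<rho> z) - f (r (fst z))) * \<psi> (fst z) * deriv chi (snd z))" for z
  define P where "P t = indicator {0<..<T} t * (\<psi> t * f (r t))" for t
  define Q where "Q x = indicator {\<alpha><..<\<beta>} x * deriv chi x" for x
  define h3 where "h3 z = P (fst z) * Q (snd z)" for z
  have [measurable]: "P \<in> borel_measurable borel" unfolding P_def[abs_def] by measurable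
  have [measurable]: "Q \<in> borel_measurable borel" unfolding Q_def[abs_def] by measurable
  have [measurable]: "h1 \<in> borel_measurable PP" unfolding h1_def[abs_def] by measurable
  have [measurable]: "h2 \<in> borel_measurable PP" unfolding h2_def[abs_def] by measurable
  have [measurable]: "h3 \<in> borel_measurable PP" unfolding h3_def[abs_def] by measurable
  have dpt: "pdt (tens \<psi> chi) = tens (deriv \<psi>) chi" by (rule pdt_tens[OF smooth1_diff[OF \<psi>(1)]])
  have dpx: "pdx (tens \<psi> chi) = tens \<psi> (deriv chi)" by (rule pdx_tens[OF smooth1_diff[OF chi(1)]])
  have split: "indicator ?B z *\<^sub>R (\<rho> z * (pdt (tens \<psi> chi) z + v (\<rho> z) * pdx (tens \<psi> chi) z))
      = h1 z + h2 z + h3 z" for z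
  proof -
    have aux: "(i1 * i2) * (p * (dp * c + w * (ps * dc))) = i1 * i2 * (p * dp * c) + i1 * i2 * ((w * p - fr) * ps * dc) + (i1 * (ps * fr)) * (i2 * dc)"
      for i1 i2 p dp c w ps dc fr :: real
      by (simp add: algebra_simps)
    show ?thesis
      unfolding dpt dpx unfolding h1_def h2_def h3_def P_def Q_def tens_def f_def indicator_times real_scaleR_def
      by (rule aux)
  qed
  have box_fin: "emeasure PP ({0<..<T} \<times> ?J) < \<infinity>"
    using emeasure_box2[of 0 T a' b'] Tpos J by simp
  have Bfin: "emeasure PP ?B < \<infinity>"
    using emeasure_box2[of 0 T \<alpha> \<beta>] Tpos ab by simp
  have Bsets: "?B \<in> sets PP" "{0<..<T} \<times> ?J \<in> sets PP" by (auto intro!: pair_measureI)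
  have h1_bd: "AE z in PP. \<bar>h1 z\<bar> \<le> (\<bar>M\<bar> * \<Psi>1) * indicator ({0<..<T} \<times> ?J) z"
    using rho_bd2
  proof eventually_elim
    case (elim z)
    show ?case
    proof (cases "fst z \<in> {0<..<T} \<and> snd z \<in> {\<alpha><..<\<beta>}")
      case True
      show ?thesis
      proof (cases "snd z \<in> ?J")
        case True2: True
        have "\<bar>h1 z\<bar> = \<bar>\<rho> z\<bar> * \<bar>deriv \<psi> (fst z)\<bar> * \<bar>chi (snd z)\<bar>"
          using True by (simp add: h1_def abs_mult)
        also have "\<dots> \<le> \<bar>M\<bar> * \<Psi>1 * 1"
          using elim True \<psi>(3)[of "fst z"] chi(2)[of "snd z"]
          by (intro mult_mono) auto
        finally show ?thesis using True True2 by (simp add: indicator_times)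
      next
        case False
        then show ?thesis using True chi(4)[of "snd z"] by (simp add: h1_def indicator_times)
      qed
    next
      case False
      then show ?thesis using nn by (auto simp: h1_def indicator_times split: split_indicator)
    qed
  qed
  have h1_int: "integrable PP h1"
    by (rule integrable_bdd[OF _ Bsets(2) box_fin _ h1_bd]) (use nn in auto)
  have int_box: "integral\<^sup>L PP (\<lambda>z. (\<bar>M\<bar> * \<Psi>1) * indicator ({0<..<T} \<times> ?J) z) = \<bar>M\<bar> * \<Psi>1 * (T * ?w)"
  proof -
    have "measure PP ({0<..<T} \<times> ?J) = T * ?w"
      using emeasure_box2[of 0 T a' b'] Tpos J by (simp add: measure_def)
    then show ?thesis using Bsets(2) box_fin by simp
  qed
  have I1: "\<bar>integral\<^sup>L PP h1\<bar> \<le> \<bar>M\<bar> * \<Psi>1 * T * ?w"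
  proof -
    have "\<bar>integral\<^sup>L PP h1\<bar> \<le> integral\<^sup>L PP (\<lambda>z. (\<bar>M\<bar> * \<Psi>1) * indicator ({0<..<T} \<times> ?J) z)"
      using h1_bd h1_int Bsets(2) box_fin
      by (intro order.trans[OF integral_abs_bound] integral_mono_AE) auto
    also have "\<dots> = \<bar>M\<bar> * \<Psi>1 * (T * ?w)" by (rule int_box)
    finally show ?thesis by (simp add: mult.assoc)
  qed
  define k where "k z = (\<Psi>0 * K1 * indicator ?J (snd z)) *
      (indicator {0<..<T} (fst z) * \<bar>f (\<rho> z) - f (r (fst z))\<bar>)" for z
  have [measurable]: "k \<in> borel_measurable PP" unfolding k_def[abs_def] by measurable
  have h2_k: "\<bar>h2 z\<bar> \<le> k z" for z
  proof (cases "fst z \<in> {0<..<T} \<and> snd z \<in> {\<alpha><..<\<beta>}")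
    case True
    show ?thesis
    proof (cases "snd z \<in> ?J")
      case True2: True
      have "\<bar>h2 z\<bar> = \<bar>f (\<rho> z) - f (r (fst z))\<bar> * \<bar>\<psi> (fst z)\<bar> * \<bar>deriv chi (snd z)\<bar>"
        using True by (simp add: h2_def abs_mult)
      also have "\<dots> \<le> \<bar>f (\<rho> z) - f (r (fst z))\<bar> * \<Psi>0 * K1"
        using True \<psi>(2)[of "fst z"] chi(3)[of "snd z"]
        by (intro mult_mono) auto
      finally show ?thesis using True True2 by (simp add: k_def algebra_simps)
    next
      case False
      then show ?thesis using True chi(4)[of "snd z"] nn by (simp add: h2_def k_def)
    qed
  next
    case False
    then show ?thesis using nn by (auto simp: h2_def k_def)
  qed
  have k_bd: "AE z in PP. \<bar>k z\<bar> \<le> (\<Psi>0 * K1 * (2 * Fb)) * indicator ({0<..<T} \<times> ?J) z"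
    using rho_bd2 r2
  proof eventually_elim
    case (elim z)
    show ?case
    proof (cases "fst z \<in> {0<..<T} \<and> snd z \<in> ?J")
      case True
      then have "snd z \<in> {\<alpha><..<\<beta>}" using J by auto
      then have "\<bar>f (\<rho> z)\<bar> \<le> Fb" "\<bar>f (r (fst z))\<bar> \<le> Fb"
        using elim True by (auto intro!: Fb(2))
      then have "\<bar>f (\<rho> z) - f (r (fst z))\<bar> \<le> 2 * Fb" by linarith
      then have "\<Psi>0 * K1 * \<bar>f (\<rho> z) - f (r (fst z))\<bar> \<le> \<Psi>0 * K1 * (2 * Fb)"
        using nn by (intro mult_left_mono) auto
      then show ?thesis using True nn by (simp add: k_def indicator_times abs_mult)
    next
      case False
      then show ?thesis using nn Fb by (auto simp: k_def indicator_times split: split_indicator)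
    qed
  qed
  have k_int: "integrable PP k"
    by (rule integrable_bdd[OF _ Bsets(2) box_fin _ k_bd]) (use nn Fb in auto)
  have h2_int: "integrable PP h2"
  proof (rule Bochner_Integration.integrable_bound[OF k_int])
    show "AE x in PP. norm (h2 x) \<le> norm (k x)"
      by (intro AE_I2) (simp add: order.trans[OF h2_k abs_ge_self])
  qed simp
  define D where "D x = (LINT t:{0<..<T}|lborel. \<bar>f (\<rho> (t, x)) - f (r t)\<bar>)" for x
  have D_eq: "(\<integral>t. k (t, x) \<partial>lborel) = \<Psi>0 * K1 * indicator ?J x * D x" for x
    unfolding k_def D_def set_lebesgue_integral_def by simp
  have kint_swap: "integrable PP (case_prod (\<lambda>t x. k (t, x)))" using k_int by simp
  have k_iter: "(\<integral>x. (\<integral>t. k (t, x) \<partial>lborel) \<partial>lborel) = integral\<^sup>L PP k"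
    using lborel_pair.integral_snd[OF kint_swap] by simp
  have kx_int: "integrable lborel (\<lambda>x. \<integral>t. k (t, x) \<partial>lborel)"
    using lborel_pair.integrable_snd[OF kint_swap] by simp
  have D_nonneg: "D x \<ge> 0" for x
    unfolding D_def set_lebesgue_integral_def by (intro integral_nonneg_AE AE_I2) (auto split: split_indicator)
  have "integral\<^sup>L PP k \<le> (\<integral>x. (\<Psi>0 * K1 * \<delta>) * indicator ?J x \<partial>lborel)"
    unfolding k_iter[symmetric]
  proof (rule integral_mono_AE[OF kx_int])
    show "integrable lborel (\<lambda>x. (\<Psi>0 * K1 * \<delta>) * indicator ?J x)"
      using J by (intro integrable_mult_right integrable_real_indicator) auto
    show "AE x in lborel. (\<integral>t. k (t, x) \<partial>lborel) \<le> (\<Psi>0 * K1 * \<delta>) * indicator ?J x"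
      using tr
    proof eventually_elim
      case (elim x)
      show ?case
      proof (cases "x \<in> ?J")
        case True
        then have "D x \<le> \<delta>" using elim unfolding D_def f_def by auto
        then show ?thesis using True nn by (simp add: D_eq mult_left_mono)
      next
        case False
        then show ?thesis by (simp add: D_eq)
      qed
    qed
  qed
  also have "\<dots> = \<Psi>0 * K1 * \<delta> * ?w" using J by simp
  finally have kI: "integral\<^sup>L PP k \<le> \<Psi>0 * K1 * \<delta> * ?w" .
  have I2: "\<bar>integral\<^sup>L PP h2\<bar> \<le> \<Psi>0 * K1 * \<delta> * ?w"
  proof -
    have "\<bar>integral\<^sup>L PP h2\<bar> \<le> integral\<^sup>L PP k"
      using h2_int k_int h2_k by (intro integral_abs_bound_integral) auto
    then show ?thesis using kI by simp
  qed
  have h3_bd: "AE z in PP. \<bar>h3 z\<bar> \<le> (Fb * \<Psi>0 * K1) * indicator ?B z"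
    using r2
  proof eventually_elim
    case (elim z)
    show ?case
    proof (cases "fst z \<in> {0<..<T} \<and> snd z \<in> {\<alpha><..<\<beta>}")
      case True
      have "\<bar>h3 z\<bar> = \<bar>\<psi> (fst z)\<bar> * \<bar>f (r (fst z))\<bar> * \<bar>deriv chi (snd z)\<bar>"
        using True by (simp add: h3_def P_def Q_def abs_mult)
      also have "\<dots> \<le> \<Psi>0 * Fb * K1"
        using True elim \<psi>(2)[of "fst z"] chi(3)[of "snd z"] Fb(2)[of "r (fst z)"] nn Fb(1)
        by (intro mult_mono) (auto simp: le_max_iff_disj)
      finally show ?thesis using True by (simp add: indicator_times algebra_simps)
    next
      case False
      then show ?thesis using nn Fb by (auto simp: h3_def P_def Q_def indicator_times split: split_indicator)
    qed
  qed
  have h3_int: "integrable PP h3"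
    by (rule integrable_bdd[OF _ Bsets(1) Bfin _ h3_bd]) (use nn Fb in auto)
  have I3: "integral\<^sup>L PP h3 = s * (LINT t:{0<..<T}|lborel. \<psi> t * (v (r t) * r t))"
  proof -
    have i: "integrable PP (case_prod (\<lambda>t x. P t * Q x))" using h3_int by (simp add: h3_def[abs_def] case_prod_beta')
    have "integral\<^sup>L PP h3 = (\<integral>x. (\<integral>t. P t * Q x \<partial>lborel) \<partial>lborel)"
      using lborel_pair.integral_snd[OF i] by (simp add: h3_def[abs_def] case_prod_beta')
    also have "\<dots> = (\<integral>x. (\<integral>t. P t \<partial>lborel) * Q x \<partial>lborel)" by simp
    also have "\<dots> = (\<integral>t. P t \<partial>lborel) * s" using chi(5) by (simp add: Q_def)
    also have "(\<integral>t. P t \<partial>lborel) = (LINT t:{0<..<T}|lborel. \<psi> t * (v (r t) * r t))"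
      by (simp add: P_def f_def set_lebesgue_integral_def)
    finally show ?thesis by simp
  qed
  have main: "(LINT z:?B|lborel. \<rho> z * (pdt (tens \<psi> chi) z + v (\<rho> z) * pdx (tens \<psi> chi) z))
     = integral\<^sup>L PP h1 + integral\<^sup>L PP h2 + integral\<^sup>L PP h3"
  proof -
    have "(LINT z:?B|lborel. \<rho> z * (pdt (tens \<psi> chi) z + v (\<rho> z) * pdx (tens \<psi> chi) z))
        = integral\<^sup>L PP (\<lambda>z. h1 z + h2 z + h3 z)"
      unfolding set_lebesgue_integral_def lborel_pair_eq split ..
    also have "\<dots> = integral\<^sup>L PP h1 + integral\<^sup>L PP h2 + integral\<^sup>L PP h3"
      using h1_int h2_int h3_int by simp
    finally show ?thesis .
  qed
  show ?thesis
    unfolding main I3[symmetric] using I1 I2 by linarith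
qed

end


definition Ceta :: real where "Ceta = (SOME C. 0 < C \<and> (\<forall>x. \<bar>deriv eta x\<bar> \<le> C))"

lemma Ceta: "0 < Ceta" "\<bar>deriv eta x\<bar> \<le> Ceta"
  using someI_ex[OF eta_deriv_bound] unfolding Ceta_def[symmetric] by auto

lemma deriv_local:
  fixes f g :: "real \<Rightarrow> real"
  assumes "open S" "x \<in> S" "\<And>y. y \<in> S \<Longrightarrow> f y = g y"
  shows "deriv f x = deriv g x"
  by (rule deriv_cong_ev) (use assms in \<open>auto simp: eventually_nhds\<close>)

lemma deriv_eta_aff: "deriv (\<lambda>x. eta (a * x + b)) x = deriv eta (a * x + b) * a"
proof -
  have "((\<lambda>x. a * x + b) has_real_derivative a) (at x)"
    by (auto intro!: derivative_eq_intros)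
  from DERIV_chain2[OF sm_DERIV[OF eta_sm[of 0]] this]
  show ?thesis by (rule DERIV_imp_deriv)
qed

lemma smooth1_isCont_deriv: "smooth1 g \<Longrightarrow> isCont (deriv g) x"
  using smooth1_cont[OF smooth1_deriv] continuous_on_eq_continuous_at open_UNIV by blast

lemma FTC_Ioo:
  assumes "smooth1 g" "a \<le> b"
  shows "(\<integral>x. indicator {a<..<b} x * deriv g x \<partial>lborel) = g b - g a"
proof -
  have [measurable]: "deriv g \<in> borel_measurable borel"
    by (intro borel_measurable_continuous_onI smooth1_cont smooth1_deriv assms(1))
  have "(\<integral>x. deriv g x * indicator {a..b} x \<partial>lborel) = g b - g a"
    by (rule integral_FTC_Icc_real[OF assms(2)])
       (auto intro: smooth1_isCont_deriv[OF assms(1)] sm_DERIV simp: DERIV_deriv_iff_real_differentiable smooth1_diff[OF assms(1)])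
  moreover have "(\<integral>x. indicator {a<..<b} x * deriv g x \<partial>lborel) = (\<integral>x. deriv g x * indicator {a..b} x \<partial>lborel)"
  proof (rule integral_cong_AE)
    show "AE x in lborel. indicator {a<..<b} x * deriv g x = deriv g x * indicator {a..b} x"
      using AE_lborel_singleton[of a] AE_lborel_singleton[of b]
      by eventually_elim (auto split: split_indicator)
  qed auto
  ultimately show ?thesis by simp
qed

lemma chi_left:
  assumes "\<alpha> < \<beta>" "0 < \<epsilon>" "2 * \<epsilon> \<le> \<beta> - \<alpha>"
  shows "\<exists>chi e f. smooth1 chi \<and> (\<forall>x. x \<notin> {e..f} \<longrightarrow> chi x = 0) \<and> chi \<alpha> = 1 \<and> chi \<beta> = 0 \<and>
     (\<forall>x\<in>{\<alpha><..<\<beta>}. \<bar>chi x\<bar> \<le> 1) \<and> (\<forall>x\<in>{\<alpha><..<\<beta>}. \<bar>deriv chi x\<bar> \<le> Ceta / \<epsilon>) \<and>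
     (\<forall>x\<in>{\<alpha><..<\<beta>}. x \<notin> {\<alpha><..<\<alpha> + 2 * \<epsilon>} \<longrightarrow> chi x = 0 \<and> deriv chi x = 0) \<and>
     (\<integral>x. indicator {\<alpha><..<\<beta>} x * deriv chi x \<partial>lborel) = -1"
proof -
  define chi where "chi x = (1 - eta (1 * x + (2 - \<alpha>))) * eta ((1/\<epsilon>) * x + (- \<alpha> / \<epsilon>))" for x
  have sm: "smooth1 chi" unfolding chi_def[abs_def]
    by (intro smooth1_mult smooth1_oneminus_eta_aff smooth1_eta_aff)
  have aff: "(1/\<epsilon>) * x + (- \<alpha> / \<epsilon>) = (x - \<alpha>) / \<epsilon>" for x
    using assms(2) by (simp add: field_simps)
  have loc: "chi x = eta ((1/\<epsilon>) * x + (- \<alpha> / \<epsilon>))" if "x > \<alpha> - 1" for x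
    using that eta_ge1[of "1 * x + (2 - \<alpha>)"] by (simp add: chi_def)
  have zero_hi: "chi x = 0" if "x > \<alpha> + \<epsilon>" for x
  proof -
    have g: "(x - \<alpha>) / \<epsilon> \<ge> 1" using that assms(2) by (simp add: field_simps)
    have "chi x = eta ((1/\<epsilon>) * x + (- \<alpha> / \<epsilon>))" by (rule loc) (use that assms(2) in linarith)
    also have "\<dots> = eta ((x - \<alpha>) / \<epsilon>)" by (simp only: aff)
    also have "\<dots> = 0" by (rule eta_ge1[OF g])
    finally show ?thesis .
  qed
  have zero_out: "\<forall>x. x \<notin> {\<alpha> - 2..\<alpha> + \<epsilon>} \<longrightarrow> chi x = 0"
  proof (intro allI impI)
    fix x assume x: "x \<notin> {\<alpha> - 2..\<alpha> + \<epsilon>}"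
    show "chi x = 0"
    proof (cases "x < \<alpha> - 2")
      case True
      then show ?thesis using eta_le0[of "1 * x + (2 - \<alpha>)"] by (simp add: chi_def)
    next
      case False
      then show ?thesis using x zero_hi by auto
    qed
  qed
  have ca: "chi \<alpha> = 1" using loc[of \<alpha>] eta_le0[of 0] by (simp add: aff)
  have cb: "chi \<beta> = 0"
  proof -
    have "\<beta> > \<alpha> + \<epsilon>" using assms by simp
    then show ?thesis by (rule zero_hi)
  qed
  have bd: "\<forall>x\<in>{\<alpha><..<\<beta>}. \<bar>chi x\<bar> \<le> 1"
    using loc eta_nonneg eta_le1 by (auto simp: abs_le_iff intro: order.trans[OF _ eta_le1])
  have dloc: "deriv chi x = deriv eta ((1/\<epsilon>) * x + (- \<alpha> / \<epsilon>)) * (1/\<epsilon>)" if "x > \<alpha> - 1" for x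
  proof -
    have "deriv chi x = deriv (\<lambda>x. eta ((1/\<epsilon>) * x + (- \<alpha> / \<epsilon>))) x"
      by (rule deriv_local[of "{\<alpha> - 1<..}"]) (use that loc in auto)
    also have "\<dots> = deriv eta ((1/\<epsilon>) * x + (- \<alpha> / \<epsilon>)) * (1/\<epsilon>)"
      by (rule deriv_eta_aff)
    finally show ?thesis .
  qed
  have dbd: "\<forall>x\<in>{\<alpha><..<\<beta>}. \<bar>deriv chi x\<bar> \<le> Ceta / \<epsilon>"
  proof
    fix x assume "x \<in> {\<alpha><..<\<beta>}"
    then have "deriv chi x = deriv eta ((1/\<epsilon>) * x + (- \<alpha> / \<epsilon>)) * (1/\<epsilon>)" by (intro dloc) auto
    then have "\<bar>deriv chi x\<bar> = \<bar>deriv eta ((1/\<epsilon>) * x + (- \<alpha> / \<epsilon>))\<bar> / \<epsilon>"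
      using assms(2) by (simp add: abs_mult)
    also have "\<dots> \<le> Ceta / \<epsilon>" using assms(2) Ceta(2) by (intro divide_right_mono) auto
    finally show "\<bar>deriv chi x\<bar> \<le> Ceta / \<epsilon>" .
  qed
  have outJ: "\<forall>x\<in>{\<alpha><..<\<beta>}. x \<notin> {\<alpha><..<\<alpha> + 2 * \<epsilon>} \<longrightarrow> chi x = 0 \<and> deriv chi x = 0"
  proof (intro ballI impI)
    fix x assume x: "x \<in> {\<alpha><..<\<beta>}" "x \<notin> {\<alpha><..<\<alpha> + 2 * \<epsilon>}"
    then have "x > \<alpha> + \<epsilon>" using assms(2) by auto
    moreover have "deriv chi x = 0"
      by (rule deriv_locconst[of "{\<alpha> + \<epsilon><..}" _ _ 0]) (use \<open>x > \<alpha> + \<epsilon>\<close> zero_hi in auto)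
    ultimately show "chi x = 0 \<and> deriv chi x = 0" using zero_hi by auto
  qed
  have int: "(\<integral>x. indicator {\<alpha><..<\<beta>} x * deriv chi x \<partial>lborel) = -1"
    using FTC_Ioo[OF sm, of \<alpha> \<beta>] assms(1) ca cb by simp
  show ?thesis
    using sm zero_out ca cb bd dbd outJ int by blast
qed

lemma chi_right:
  assumes "\<alpha> < \<beta>" "0 < \<epsilon>" "2 * \<epsilon> \<le> \<beta> - \<alpha>"
  shows "\<exists>chi e f. smooth1 chi \<and> (\<forall>x. x \<notin> {e..f} \<longrightarrow> chi x = 0) \<and> chi \<alpha> = 0 \<and> chi \<beta> = 1 \<and>
     (\<forall>x\<in>{\<alpha><..<\<beta>}. \<bar>chi x\<bar> \<le> 1) \<and> (\<forall>x\<in>{\<alpha><..<\<beta>}. \<bar>deriv chi x\<bar> \<le> Ceta / \<epsilon>) \<and>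
     (\<forall>x\<in>{\<alpha><..<\<beta>}. x \<notin> {\<beta> - 2 * \<epsilon><..<\<beta>} \<longrightarrow> chi x = 0 \<and> deriv chi x = 0) \<and>
     (\<integral>x. indicator {\<alpha><..<\<beta>} x * deriv chi x \<partial>lborel) = 1"
proof -
  define chi where "chi x = (1 - eta ((-1) * x + (\<beta> + 2))) * eta ((-1/\<epsilon>) * x + (\<beta> / \<epsilon>))" for x
  have sm: "smooth1 chi" unfolding chi_def[abs_def]
    by (intro smooth1_mult smooth1_oneminus_eta_aff smooth1_eta_aff)
  have aff: "(-1/\<epsilon>) * x + (\<beta> / \<epsilon>) = (\<beta> - x) / \<epsilon>" for x
    using assms(2) by (simp add: field_simps)
  have loc: "chi x = eta ((-1/\<epsilon>) * x + (\<beta> / \<epsilon>))" if "x < \<beta> + 1" for x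
    using that eta_ge1[of "(-1) * x + (\<beta> + 2)"] by (simp add: chi_def)
  have zero_lo: "chi x = 0" if "x < \<beta> - \<epsilon>" for x
  proof -
    have g: "(\<beta> - x) / \<epsilon> \<ge> 1" using that assms(2) by (simp add: field_simps)
    have "chi x = eta ((-1/\<epsilon>) * x + (\<beta> / \<epsilon>))" by (rule loc) (use that assms(2) in linarith)
    also have "\<dots> = eta ((\<beta> - x) / \<epsilon>)" by (simp only: aff)
    also have "\<dots> = 0" by (rule eta_ge1[OF g])
    finally show ?thesis .
  qed
  have zero_out: "\<forall>x. x \<notin> {\<beta> - \<epsilon>..\<beta> + 2} \<longrightarrow> chi x = 0"
  proof (intro allI impI)
    fix x assume x: "x \<notin> {\<beta> - \<epsilon>..\<beta> + 2}"
    show "chi x = 0"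
    proof (cases "x > \<beta> + 2")
      case True
      then show ?thesis using eta_le0[of "(-1) * x + (\<beta> + 2)"] by (simp add: chi_def)
    next
      case False
      then show ?thesis using x zero_lo by auto
    qed
  qed
  have cb: "chi \<beta> = 1" using loc[of \<beta>] eta_le0[of 0] by (simp add: aff)
  have ca: "chi \<alpha> = 0"
  proof -
    have "\<alpha> < \<beta> - \<epsilon>" using assms by simp
    then show ?thesis by (rule zero_lo)
  qed
  have bd: "\<forall>x\<in>{\<alpha><..<\<beta>}. \<bar>chi x\<bar> \<le> 1"
    using loc eta_nonneg eta_le1 by (auto simp: abs_le_iff intro: order.trans[OF _ eta_le1])
  have dloc: "deriv chi x = deriv eta ((-1/\<epsilon>) * x + (\<beta> / \<epsilon>)) * (-1/\<epsilon>)" if "x < \<beta> + 1" for x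
  proof -
    have "deriv chi x = deriv (\<lambda>x. eta ((-1/\<epsilon>) * x + (\<beta> / \<epsilon>))) x"
      by (rule deriv_local[of "{..<\<beta> + 1}"]) (use that loc in auto)
    also have "\<dots> = deriv eta ((-1/\<epsilon>) * x + (\<beta> / \<epsilon>)) * (-1/\<epsilon>)"
      by (rule deriv_eta_aff)
    finally show ?thesis .
  qed
  have dbd: "\<forall>x\<in>{\<alpha><..<\<beta>}. \<bar>deriv chi x\<bar> \<le> Ceta / \<epsilon>"
  proof
    fix x assume "x \<in> {\<alpha><..<\<beta>}"
    then have "deriv chi x = deriv eta ((-1/\<epsilon>) * x + (\<beta> / \<epsilon>)) * (-1/\<epsilon>)" by (intro dloc) auto
    then have "\<bar>deriv chi x\<bar> = \<bar>deriv eta ((-1/\<epsilon>) * x + (\<beta> / \<epsilon>))\<bar> / \<epsilon>"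
      using assms(2) by (simp add: abs_mult)
    also have "\<dots> \<le> Ceta / \<epsilon>" using assms(2) Ceta(2) by (intro divide_right_mono) auto
    finally show "\<bar>deriv chi x\<bar> \<le> Ceta / \<epsilon>" .
  qed
  have outJ: "\<forall>x\<in>{\<alpha><..<\<beta>}. x \<notin> {\<beta> - 2 * \<epsilon><..<\<beta>} \<longrightarrow> chi x = 0 \<and> deriv chi x = 0"
  proof (intro ballI impI)
    fix x assume x: "x \<in> {\<alpha><..<\<beta>}" "x \<notin> {\<beta> - 2 * \<epsilon><..<\<beta>}"
    then have "x < \<beta> - \<epsilon>" using assms(2) by auto
    moreover have "deriv chi x = 0"
      by (rule deriv_locconst[of "{..<\<beta> - \<epsilon>}" _ _ 0]) (use \<open>x < \<beta> - \<epsilon>\<close> zero_lo in auto)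
    ultimately show "chi x = 0 \<and> deriv chi x = 0" using zero_lo by auto
  qed
  have int: "(\<integral>x. indicator {\<alpha><..<\<beta>} x * deriv chi x \<partial>lborel) = 1"
    using FTC_Ioo[OF sm, of \<alpha> \<beta>] assms(1) ca cb by simp
  show ?thesis
    using sm zero_out ca cb bd dbd outJ int by blast
qed


lemma eventually_large_real: "(0::real) < a \<Longrightarrow> eventually (\<lambda>n. a \<le> real (Suc n) * b) sequentially \<or> b \<le> 0"
proof (cases "b \<le> 0")
  case False
  obtain n0 :: nat where "a / b \<le> real n0" using real_arch_simple by blast
  then have "eventually (\<lambda>n. a \<le> real (Suc n) * b) sequentially"
    unfolding eventually_sequentially
  proof (intro exI allI impI)
    fix n assume "n0 \<le> n" "a / b \<le> real n0"
    then have "a / b \<le> real (Suc n)" by simp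
    then show "a \<le> real (Suc n) * b" using False by (simp add: field_simps)
  qed
  then show ?thesis by simp
qed simp

lemma psi_seq_props:
  fixes c d :: real and n :: nat
  defines "N \<equiv> real (Suc n)"
  defines "\<psi> \<equiv> \<lambda>t. (1 - eta (N * t + (- N * c - 1))) * eta (N * t + (- N * d + 2))"
  shows "smooth1 \<psi>" "\<And>t. \<psi> t \<noteq> 0 \<Longrightarrow> c + 1 / N \<le> t \<and> t \<le> d - 1 / N"
    "\<And>t. \<bar>\<psi> t\<bar> \<le> 1"
proof -
  show "smooth1 \<psi>" unfolding \<psi>_def by (intro smooth1_mult smooth1_oneminus_eta_aff smooth1_eta_aff)
  have Npos: "N > 0" unfolding N_def by simp
  fix t assume nz: "\<psi> t \<noteq> 0"
  have 1: "N * t + (- N * c - 1) > 0"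
  proof (rule ccontr)
    assume "\<not> ?thesis"
    then have "eta (N * t + (- N * c - 1)) = 1" by (intro eta_le0) simp
    then show False using nz by (simp add: \<psi>_def)
  qed
  have 2: "N * t + (- N * d + 2) < 1"
  proof (rule ccontr)
    assume "\<not> ?thesis"
    then have "eta (N * t + (- N * d + 2)) = 0" by (intro eta_ge1) simp
    then show False using nz by (simp add: \<psi>_def)
  qed
  from 1 have "c + 1 / N \<le> t" using Npos by (simp add: field_simps)
  moreover from 2 have "t \<le> d - 1 / N" using Npos by (simp add: field_simps)
  ultimately show "c + 1 / N \<le> t \<and> t \<le> d - 1 / N" by simp
next
  fix t
  have "0 \<le> 1 - eta (N * t + (- N * c - 1))" "1 - eta (N * t + (- N * c - 1)) \<le> 1"
    using eta_le1 eta_nonneg by (auto simp: algebra_simps)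
  then show "\<bar>\<psi> t\<bar> \<le> 1" unfolding \<psi>_def
    using eta_le1 eta_nonneg by (auto simp: abs_mult intro!: mult_le_one)
qed

lemma psi_seq_lim:
  fixes c d t :: real
  assumes "c < d"
  shows "(\<lambda>n. (1 - eta (real (Suc n) * t + (- real (Suc n) * c - 1))) * eta (real (Suc n) * t + (- real (Suc n) * d + 2)))
     \<longlonglongrightarrow> indicator {c<..<d} t"
proof (cases "t \<in> {c<..<d}")
  case True
  have "eventually (\<lambda>n. 2 \<le> real (Suc n) * (t - c)) sequentially"
    using eventually_large_real[of 2 "t - c"] True by auto
  moreover have "eventually (\<lambda>n. 2 \<le> real (Suc n) * (d - t)) sequentially"
    using eventually_large_real[of 2 "d - t"] True by auto
  ultimately have "eventually (\<lambda>n. (1 - eta (real (Suc n) * t + (- real (Suc n) * c - 1))) * eta (real (Suc n) * t + (- real (Suc n) * d + 2)) = indicator {c<..<d} t) sequentially"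
  proof eventually_elim
    case (elim n)
    have "eta (real (Suc n) * t + (- real (Suc n) * c - 1)) = 0"
      using elim by (intro eta_ge1) (simp add: algebra_simps)
    moreover have "eta (real (Suc n) * t + (- real (Suc n) * d + 2)) = 1"
      using elim by (intro eta_le0) (simp add: algebra_simps)
    ultimately show ?case using True by simp
  qed
  then show ?thesis by (rule tendsto_eventually)
next
  case False
  have z: "(1 - eta (real (Suc n) * t + (- real (Suc n) * c - 1))) * eta (real (Suc n) * t + (- real (Suc n) * d + 2)) = 0" for n
  proof (cases "t \<le> c")
    case True
    have "real (Suc n) * t \<le> real (Suc n) * c" using True by (intro mult_left_mono) auto
    then have "eta (real (Suc n) * t + (- real (Suc n) * c - 1)) = 1"
      by (intro eta_le0) (use mult_minus_left[of "real (Suc n)" c] in linarith)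
    then show ?thesis by simp
  next
    case False2: False
    with False have "t \<ge> d" by auto
    have "real (Suc n) * t \<ge> real (Suc n) * d" using \<open>t \<ge> d\<close> by (intro mult_left_mono) auto
    then have "eta (real (Suc n) * t + (- real (Suc n) * d + 2)) = 0"
      by (intro eta_ge1) (use mult_minus_left[of "real (Suc n)" d] in linarith)
    then show ?thesis by simp
  qed
  show ?thesis unfolding z using False by simp
qed

definition psis :: "real \<Rightarrow> real \<Rightarrow> nat \<Rightarrow> real \<Rightarrow> real" where
  "psis c d n t = (1 - eta (real (Suc n) * t + (- real (Suc n) * c - 1))) * eta (real (Suc n) * t + (- real (Suc n) * d + 2))"

lemma psis_eq: "psis c d n = (\<lambda>t. (1 - eta (real (Suc n) * t + (- real (Suc n) * c - 1))) * eta (real (Suc n) * t + (- real (Suc n) * d + 2)))"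
  by (rule ext) (simp add: psis_def)

lemma psis_props1: "smooth1 (psis c d n)"
  unfolding psis_eq using psi_seq_props(1)[where n=n and c=c and d=d] .
lemma psis_props2: "psis c d n t \<noteq> 0 \<Longrightarrow> c + 1 / real (Suc n) \<le> t \<and> t \<le> d - 1 / real (Suc n)"
  unfolding psis_def using psi_seq_props(2)[where n=n and c=c and d=d and t=t] by blast
lemma psis_props3: "\<bar>psis c d n t\<bar> \<le> 1"
  unfolding psis_def using psi_seq_props(3)[where n=n and c=c and d=d and t=t] by blast
lemmas psis_props = psis_props1 psis_props2 psis_props3

lemma psis_lim: "c < d \<Longrightarrow> (\<lambda>n. psis c d n t) \<longlonglongrightarrow> indicator {c<..<d} t"
  unfolding psis_def by (rule psi_seq_lim)

lemma eta_meas[measurable]: "eta \<in> borel_measurable borel"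
  by (rule borel_measurable_continuous_onI[OF smooth1_cont[OF eta_smooth]])

lemma psis_meas[measurable]: "psis c d n \<in> borel_measurable borel"
  unfolding psis_eq by measurable

lemma dBR:
  fixes g :: "real \<Rightarrow> real" and T K :: real
  assumes gm[measurable]: "g \<in> borel_measurable borel"
    and gb: "AE t in lborel. t \<in> {0<..<T} \<longrightarrow> \<bar>g t\<bar> \<le> K"
    and Tpos: "0 < T"
    and orth: "\<And>\<psi> c d. smooth1 \<psi> \<Longrightarrow> 0 < c \<Longrightarrow> d < T \<Longrightarrow> (\<And>t. t \<notin> {c..d} \<Longrightarrow> \<psi> t = 0) \<Longrightarrow>
        (LINT t:{0<..<T}|lborel. \<psi> t * g t) = 0"
  shows "AE t in lborel. t \<in> {0<..<T} \<longrightarrow> g t = 0"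
proof -
  define G where "G t = indicator {0<..<T} t * g t" for t
  have [measurable]: "G \<in> borel_measurable borel" unfolding G_def[abs_def] by measurable
  have Gb: "AE t in lborel. \<bar>G t\<bar> \<le> \<bar>K\<bar> * indicator {0<..<T} t"
    using gb
  proof eventually_elim
    case (elim t)
    show ?case
    proof (cases "t \<in> {0<..<T}")
      case True
      then have "\<bar>g t\<bar> \<le> K" using elim by simp
      then show ?thesis using True abs_ge_self[of K] by (simp add: G_def)
    next
      case False
      then show ?thesis by (simp add: G_def)
    qed
  qed
  have Gint: "integrable lborel G"
  proof (rule integrable_bdd[OF _ _ _ _ Gb])
    show "G \<in> borel_measurable lborel" by measurable
    show "{0<..<T} \<in> sets lborel" by simp
    show "emeasure lborel {0<..<T} < \<infinity>" using Tpos by simp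
  qed simp
  have absGint: "integrable lborel (\<lambda>t. \<bar>G t\<bar>)" using Gint by simp
  have step1: "(\<integral>t. indicator {c<..<d} t * G t \<partial>lborel) = 0" if cd: "0 \<le> c" "c < d" "d \<le> T" for c d
  proof -
    define s where "s n t = psis c d n t * G t" for n t
    have [measurable]: "s n \<in> borel_measurable borel" for n unfolding s_def[abs_def] by measurable
    have lim: "(\<lambda>n. integral\<^sup>L lborel (s n)) \<longlonglongrightarrow> integral\<^sup>L lborel (\<lambda>t. indicator {c<..<d} t * G t)"
    proof (rule integral_dominated_convergence[where w="\<lambda>t. \<bar>G t\<bar>"])
      show "AE x in lborel. (\<lambda>n. s n x) \<longlonglongrightarrow> indicator {c<..<d} x * G x"
        by (intro AE_I2) (unfold s_def, intro tendsto_mult psis_lim tendsto_const cd)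
      show "AE x in lborel. norm (s n x) \<le> \<bar>G x\<bar>" for n
      proof (intro AE_I2)
        fix x
        have "\<bar>psis c d n x\<bar> * \<bar>G x\<bar> \<le> 1 * \<bar>G x\<bar>" by (intro mult_right_mono psis_props(3)) auto
        then show "norm (s n x) \<le> \<bar>G x\<bar>" by (simp add: s_def abs_mult)
      qed
      show "(\<lambda>t. indicator {c<..<d} t * G t) \<in> borel_measurable lborel" by measurable
      show "s i \<in> borel_measurable lborel" for i by measurable
      show "integrable lborel (\<lambda>t. \<bar>G t\<bar>)" by (rule absGint)
    qed
    have zero: "integral\<^sup>L lborel (s n) = 0" for n
    proof -
      have "(LINT t:{0<..<T}|lborel. psis c d n t * g t) = 0"
      proof (rule orth[OF psis_props(1)])
        show "0 < c + 1 / real (Suc n)" using cd by (simp add: add_nonneg_pos)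
        have "0 < 1 / real (Suc n)" by simp
        then show "d - 1 / real (Suc n) < T" using cd by linarith
        show "psis c d n t = 0" if "t \<notin> {c + 1 / real (Suc n)..d - 1 / real (Suc n)}" for t
          using psis_props(2)[of c d n t] that by auto
      qed
      moreover have "(LINT t:{0<..<T}|lborel. psis c d n t * g t) = integral\<^sup>L lborel (s n)"
        unfolding set_lebesgue_integral_def s_def G_def by (simp add: algebra_simps)
      ultimately show ?thesis by simp
    qed
    from lim have "(\<lambda>n. 0::real) \<longlonglongrightarrow> (\<integral>t. indicator {c<..<d} t * G t \<partial>lborel)"
      unfolding zero .
    then show ?thesis by (simp add: LIMSEQ_const_iff)
  qed
  define gp where "gp t = max 0 (G t)" for t
  define gn where "gn t = max 0 (- G t)" for t
  have [measurable]: "gp \<in> borel_measurable borel"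
    unfolding gp_def[abs_def] by measurable
  have [measurable]: "gn \<in> borel_measurable borel"
    unfolding gn_def[abs_def] by measurable
  have gp_int: "integrable lborel gp"
  proof (rule Bochner_Integration.integrable_bound[OF absGint])
    show "gp \<in> borel_measurable lborel" by measurable
    show "AE x in lborel. norm (gp x) \<le> norm \<bar>G x\<bar>" by (intro AE_I2) (simp add: gp_def)
  qed
  have gn_int: "integrable lborel gn"
  proof (rule Bochner_Integration.integrable_bound[OF absGint])
    show "gn \<in> borel_measurable lborel" by measurable
    show "AE x in lborel. norm (gn x) \<le> norm \<bar>G x\<bar>" by (intro AE_I2) (simp add: gn_def)
  qed
  have eqI: "(\<integral>t. indicator {x<..} t * gp t \<partial>lborel) = (\<integral>t. indicator {x<..} t * gn t \<partial>lborel)" for x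
  proof -
    have i1: "integrable lborel (\<lambda>t. indicator {x<..} t * gp t)"
      using integrable_mult_indicator[OF _ gp_int, of "{x<..}"] by simp
    have i2: "integrable lborel (\<lambda>t. indicator {x<..} t * gn t)"
      using integrable_mult_indicator[OF _ gn_int, of "{x<..}"] by simp
    have "(\<integral>t. indicator {x<..} t * gp t \<partial>lborel) - (\<integral>t. indicator {x<..} t * gn t \<partial>lborel)
        = (\<integral>t. indicator {x<..} t * gp t - indicator {x<..} t * gn t \<partial>lborel)"
      using i1 i2 by simp
    also have "\<dots> = (\<integral>t. indicator {max x 0<..<T} t * G t \<partial>lborel)"
    proof (rule Bochner_Integration.integral_cong[OF refl])
      fix t
      have "gp t - gn t = G t" unfolding gp_def gn_def by linarith
      then have "indicator {x<..} t * gp t - indicator {x<..} t * gn t = indicator {x<..} t * G t"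
        by (simp add: right_diff_distrib[symmetric])
      also have "\<dots> = indicator {max x 0<..<T} t * G t"
        by (cases "t \<in> {0<..<T}") (simp_all add: G_def indicator_def)
      finally show "indicator {x<..} t * gp t - indicator {x<..} t * gn t = indicator {max x 0<..<T} t * G t" .
    qed
    also have "\<dots> = 0"
    proof (cases "max x 0 < T")
      case True
      then show ?thesis by (intro step1) auto
    next
      case False
      then have "{max x 0<..<T} = {}" by auto
      then show ?thesis by simp
    qed
    finally show ?thesis by simp
  qed
  have em: "emeasure (density lborel (\<lambda>t. ennreal (h t))) {x<..} = ennreal (\<integral>t. indicator {x<..} t * h t \<partial>lborel)"
    if hm: "h \<in> borel_measurable borel" and hi: "integrable lborel h" and hn: "\<And>t. 0 \<le> h t" for h :: "real \<Rightarrow> real" and x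
  proof -
    have [measurable]: "h \<in> borel_measurable borel" by (rule hm)
    have "emeasure (density lborel (\<lambda>t. ennreal (h t))) {x<..} = (\<integral>\<^sup>+t. ennreal (h t) * indicator {x<..} t \<partial>lborel)"
      by (rule emeasure_density) auto
    also have "\<dots> = (\<integral>\<^sup>+t. ennreal (indicator {x<..} t * h t) \<partial>lborel)"
      by (rule nn_integral_cong) (auto split: split_indicator)
    also have "\<dots> = ennreal (\<integral>t. indicator {x<..} t * h t \<partial>lborel)"
      using integrable_mult_indicator[OF _ hi, of "{x<..}"] hn
      by (intro nn_integral_eq_integral) (auto split: split_indicator)
    finally show ?thesis .
  qed
  have gp_nn: "\<And>t. 0 \<le> gp t" and gn_nn: "\<And>t. 0 \<le> gn t" by (auto simp: gp_def gn_def)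
  have dens: "density lborel (\<lambda>t. ennreal (gp t)) = density lborel (\<lambda>t. ennreal (gn t))"
  proof (rule measure_eqI_lessThan)
    show "emeasure (density lborel (\<lambda>t. ennreal (gp t))) {x<..} < \<infinity>" for x
      using em[of gp x] gp_int gp_nn by simp
    show "emeasure (density lborel (\<lambda>t. ennreal (gp t))) {x<..} = emeasure (density lborel (\<lambda>t. ennreal (gn t))) {x<..}" for x
      using em[of gp x] em[of gn x] gp_int gn_int gp_nn gn_nn eqI[of x] by simp
  qed auto
  have "AE t in lborel. ennreal (gp t) = ennreal (gn t)"
  proof -
    have m1: "(\<lambda>t. ennreal (gp t)) \<in> borel_measurable lborel" by measurable
    have m2: "(\<lambda>t. ennreal (gn t)) \<in> borel_measurable lborel" by measurable
    show ?thesis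
      using dens sigma_finite_measure.density_unique_iff[OF lborel.sigma_finite_measure_axioms m1 m2] by simp
  qed
  then show ?thesis
  proof eventually_elim
    case (elim t)
    then have "gp t = gn t" using gp_nn gn_nn by simp
    then have "G t = 0" by (auto simp: gp_def gn_def max_def split: if_splits)
    then show ?case by (auto simp: G_def)
  qed
qed


lemma eps_zero:
  fixes Z :: real
  assumes "\<And>e. 0 < e \<Longrightarrow> \<bar>Z\<bar> \<le> e"
  shows "Z = 0"
proof (rule ccontr)
  assume "Z \<noteq> 0"
  then have "\<bar>Z\<bar> > 0" by simp
  with assms[of "\<bar>Z\<bar> / 2"] show False by simp
qed

lemma psi_bounds:
  assumes "smooth1 \<psi>" "\<And>t. t \<notin> {c..d} \<Longrightarrow> \<psi> t = 0"
  shows "\<exists>\<Psi>0 \<Psi>1. 0 \<le> \<Psi>0 \<and> 0 \<le> \<Psi>1 \<and> (\<forall>t. \<bar>\<psi> t\<bar> \<le> \<Psi>0) \<and> (\<forall>t. \<bar>deriv \<psi> t\<bar> \<le> \<Psi>1)"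
proof -
  obtain A where A: "\<forall>t. \<bar>\<psi> t\<bar> \<le> A"
    using cont_bound[OF smooth1_cont[OF assms(1)] assms(2)] by blast
  obtain B where B: "\<forall>t. \<bar>deriv \<psi> t\<bar> \<le> B"
    using cont_bound[OF smooth1_cont[OF smooth1_deriv[OF assms(1)]] deriv_zero_outside[where a=c and b=d and f=\<psi>, OF assms(2)]] by blast
  have "\<forall>t. \<bar>\<psi> t\<bar> \<le> max A 0" "\<forall>t. \<bar>deriv \<psi> t\<bar> \<le> max B 0"
    using A B by (auto intro: le_max_iff_disj[THEN iffD2])
  then show ?thesis by (intro exI[of _ "max A 0"] exI[of _ "max B 0"]) auto
qed

lemma set_int_split:
  fixes p q \<psi> :: "real \<Rightarrow> real"
  assumes A: "A \<in> sets lborel" "emeasure lborel A < \<infinity>"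
    and m: "p \<in> borel_measurable borel" "q \<in> borel_measurable borel" "\<psi> \<in> borel_measurable borel"
    and b: "\<And>t. \<bar>\<psi> t\<bar> \<le> P" "AE t in lborel. t \<in> A \<longrightarrow> \<bar>p t\<bar> \<le> Kp" "AE t in lborel. t \<in> A \<longrightarrow> \<bar>q t\<bar> \<le> Kq"
  shows "(LINT t:A|lborel. \<psi> t * (p t + q t)) = (LINT t:A|lborel. \<psi> t * p t) + (LINT t:A|lborel. \<psi> t * q t)"
proof -
  have [measurable]: "p \<in> borel_measurable borel" "q \<in> borel_measurable borel" "\<psi> \<in> borel_measurable borel"
    using m by auto
  have ip: "integrable lborel (\<lambda>t. indicator A t * (\<psi> t * p t))"
  proof (rule integrable_bdd[OF _ A(1) A(2), of _ "\<bar>P\<bar> * \<bar>Kp\<bar>"])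
    show "(\<lambda>t. indicator A t * (\<psi> t * p t)) \<in> borel_measurable lborel" using A(1) by measurable
    show "AE z in lborel. \<bar>indicator A z * (\<psi> z * p z)\<bar> \<le> \<bar>P\<bar> * \<bar>Kp\<bar> * indicator A z"
      using b(2)
    proof eventually_elim
      case (elim z)
      show ?case
      proof (cases "z \<in> A")
        case True
        have "\<bar>\<psi> z\<bar> * \<bar>p z\<bar> \<le> \<bar>P\<bar> * \<bar>Kp\<bar>"
          using True elim b(1)[of z] by (intro mult_mono) auto
        then show ?thesis using True by (simp add: abs_mult)
      qed simp
    qed
  qed simp
  have iq: "integrable lborel (\<lambda>t. indicator A t * (\<psi> t * q t))"
  proof (rule integrable_bdd[OF _ A(1) A(2), of _ "\<bar>P\<bar> * \<bar>Kq\<bar>"])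
    show "(\<lambda>t. indicator A t * (\<psi> t * q t)) \<in> borel_measurable lborel" using A(1) by measurable
    show "AE z in lborel. \<bar>indicator A z * (\<psi> z * q z)\<bar> \<le> \<bar>P\<bar> * \<bar>Kq\<bar> * indicator A z"
      using b(3)
    proof eventually_elim
      case (elim z)
      show ?case
      proof (cases "z \<in> A")
        case True
        have "\<bar>\<psi> z\<bar> * \<bar>q z\<bar> \<le> \<bar>P\<bar> * \<bar>Kq\<bar>"
          using True elim b(1)[of z] by (intro mult_mono) auto
        then show ?thesis using True by (simp add: abs_mult)
      qed simp
    qed
  qed simp
  have "(\<lambda>t. indicator A t *\<^sub>R (\<psi> t * (p t + q t))) = (\<lambda>t. indicator A t * (\<psi> t * p t) + indicator A t * (\<psi> t * q t))"
    by (rule ext) (simp add: algebra_simps)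
  then show ?thesis
    unfolding set_lebesgue_integral_def using ip iq by simp
qed

context
  fixes \<alpha> \<beta> T M :: real and v :: "real \<Rightarrow> real" and \<rho> :: "real \<times> real \<Rightarrow> real"
    and \<rho>a \<rho>b Tra Trb \<rho>0 :: "real \<Rightarrow> real"
  assumes ab: "\<alpha> < \<beta>" and Tpos: "0 < T" and vcont: "continuous_on UNIV v"
    and rho_meas: "\<rho> \<in> borel_measurable borel"
    and rho_bd: "AE z in lborel. z \<in> {0<..<T} \<times> {\<alpha><..<\<beta>} \<longrightarrow> \<bar>\<rho> z\<bar> \<le> M"
    and weak: "weak_traces v T \<alpha> \<beta> \<rho> Tra Trb \<rho>0"
    and sl: "strong_trace_left v T \<alpha> \<beta> \<rho> \<rho>a"
    and sr: "strong_trace_right v T \<alpha> \<beta> \<rho> \<rho>b"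
begin

lemma weak_id:
  assumes \<psi>: "smooth1 \<psi>" "0 < c" "d < T" "\<And>t. t \<notin> {c..d} \<Longrightarrow> \<psi> t = 0"
    and chi: "smooth1 chi" "\<And>x. x \<notin> {e..f} \<Longrightarrow> chi x = 0"
  shows "(LINT z:{0<..<T} \<times> {\<alpha><..<\<beta>}|lborel. \<rho> z * (pdt (tens \<psi> chi) z + v (\<rho> z) * pdx (tens \<psi> chi) z))
     = chi \<alpha> * (LINT t:{0<..<T}|lborel. \<psi> t * Tra t) + chi \<beta> * (LINT t:{0<..<T}|lborel. \<psi> t * Trb t)"
proof -
  have tf: "test_fun ({..<T} \<times> UNIV) (tens \<psi> chi)"
    by (rule test_fun_tens[OF \<psi>(1) chi(1) \<psi>(4) chi(2)]) (use \<psi>(3) in auto)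
  from weak tf have eq: "(LINT z:{0<..<T} \<times> {\<alpha><..<\<beta>}|lborel. \<rho> z * (pdt (tens \<psi> chi) z + v (\<rho> z) * pdx (tens \<psi> chi) z))
        = (LINT t:{0<..<T}|lborel. tens \<psi> chi (t, \<alpha>) * Tra t)
        + (LINT t:{0<..<T}|lborel. tens \<psi> chi (t, \<beta>) * Trb t)
        - (LINT x:{\<alpha><..<\<beta>}|lborel. \<rho>0 x * tens \<psi> chi (0, x))"
    unfolding weak_traces_def by blast
  have z: "\<psi> 0 = 0" using \<psi>(2,4) by auto
  have 1: "(LINT t:{0<..<T}|lborel. tens \<psi> chi (t, y) * g t) = chi y * (LINT t:{0<..<T}|lborel. \<psi> t * g t)" for y g
  proof -
    have "(\<lambda>t. indicator {0<..<T} t *\<^sub>R (tens \<psi> chi (t, y) * g t)) = (\<lambda>t. chi y * (indicator {0<..<T} t *\<^sub>R (\<psi> t * g t)))"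
      by (rule ext) (simp add: tens_def)
    then show ?thesis unfolding set_lebesgue_integral_def by (simp only: integral_mult_right_zero)
  qed
  have 3: "(LINT x:{\<alpha><..<\<beta>}|lborel. \<rho>0 x * tens \<psi> chi (0, x)) = 0"
    by (simp add: tens_def z set_lebesgue_integral_def)
  show ?thesis using eq 1[of \<alpha> Tra] 1[of \<beta> Trb] 3 by simp
qed

lemma left_id:
  assumes \<psi>: "smooth1 \<psi>" "0 < c" "d < T" "\<And>t. t \<notin> {c..d} \<Longrightarrow> \<psi> t = 0"
  shows "(LINT t:{0<..<T}|lborel. \<psi> t * Tra t) = - (LINT t:{0<..<T}|lborel. \<psi> t * (v (\<rho>a t) * \<rho>a t))"
proof -
  define X where "X = (LINT t:{0<..<T}|lborel. \<psi> t * Tra t)"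
  define Y where "Y = (LINT t:{0<..<T}|lborel. \<psi> t * (v (\<rho>a t) * \<rho>a t))"
  obtain \<Psi>0 \<Psi>1 where P: "0 \<le> \<Psi>0" "0 \<le> \<Psi>1" "\<forall>t. \<bar>\<psi> t\<bar> \<le> \<Psi>0" "\<forall>t. \<bar>deriv \<psi> t\<bar> \<le> \<Psi>1"
    using psi_bounds[OF \<psi>(1) \<psi>(4)] by blast
  have ra_meas: "\<rho>a \<in> borel_measurable borel" using sl unfolding strong_trace_left_def Linf_on_def by blast
  obtain Ma where Ma: "AE t in lborel. t \<in> {0<..<T} \<longrightarrow> \<bar>\<rho>a t\<bar> \<le> Ma"
    using sl unfolding strong_trace_left_def Linf_on_def by blast
  have Ma': "AE t in lborel. t \<in> {0<..<T} \<longrightarrow> \<bar>\<rho>a t\<bar> \<le> \<bar>Ma\<bar>"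
    using Ma by eventually_elim auto
  have sl2: "\<forall>\<epsilon>>0. \<exists>\<delta>>0. AE y in lborel. \<alpha> < y \<and> y < \<alpha> + \<delta> \<and> y < \<beta> \<longrightarrow>
        (LINT t:{0<..<T}|lborel. \<bar>v (\<rho> (t, y)) * \<rho> (t, y) - v (\<rho>a t) * \<rho>a t\<bar>) < \<epsilon>"
    using sl unfolding strong_trace_left_def by blast
  have "\<bar>X + Y\<bar> \<le> e" if e: "0 < e" for e
  proof -
    define R where "R = \<Psi>0 + 1"
    have Rpos: "0 < R" and R0: "\<Psi>0 \<le> R" unfolding R_def using P(1) by auto
    define \<delta> where "\<delta> = e / (4 * R * Ceta)"
    have \<delta>pos: "0 < \<delta>" using e Ceta(1) Rpos unfolding \<delta>_def by (intro divide_pos_pos mult_pos_pos) auto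
    obtain \<delta>0 where \<delta>0: "0 < \<delta>0" "AE y in lborel. \<alpha> < y \<and> y < \<alpha> + \<delta>0 \<and> y < \<beta> \<longrightarrow>
        (LINT t:{0<..<T}|lborel. \<bar>v (\<rho> (t, y)) * \<rho> (t, y) - v (\<rho>a t) * \<rho>a t\<bar>) < \<delta>"
      using sl2 \<delta>pos by blast
    define Q where "Q = \<bar>M\<bar> * \<Psi>1 * T"
    have Q: "0 \<le> Q" unfolding Q_def using P Tpos by simp
    define \<epsilon> where "\<epsilon> = min (min (\<delta>0 / 2) ((\<beta> - \<alpha>) / 2)) (e / (4 * (Q + 1)))"
    have \<epsilon>pos: "0 < \<epsilon>" unfolding \<epsilon>_def using \<delta>0(1) ab e Q by simp
    have m0: "\<epsilon> \<le> min (\<delta>0 / 2) ((\<beta> - \<alpha>) / 2)" unfolding \<epsilon>_def by (rule min.cobounded1)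
    have \<epsilon>3: "\<epsilon> \<le> e / (4 * (Q + 1))" unfolding \<epsilon>_def by (rule min.cobounded2)
    have m: "\<epsilon> \<le> \<delta>0 / 2" "\<epsilon> \<le> (\<beta> - \<alpha>) / 2"
      using m0 min.cobounded1[of "\<delta>0 / 2" "(\<beta> - \<alpha>) / 2"] min.cobounded2[of "\<delta>0 / 2" "(\<beta> - \<alpha>) / 2"] by linarith+
    have \<epsilon>1: "2 * \<epsilon> \<le> \<delta>0" using m(1) by linarith
    have \<epsilon>2: "2 * \<epsilon> \<le> \<beta> - \<alpha>" using m(2) by (simp add: field_simps)
    obtain chi e' f' where C: "smooth1 chi" "\<forall>x. x \<notin> {e'..f'} \<longrightarrow> chi x = 0" "chi \<alpha> = 1" "chi \<beta> = 0"
      "\<forall>x\<in>{\<alpha><..<\<beta>}. \<bar>chi x\<bar> \<le> 1" "\<forall>x\<in>{\<alpha><..<\<beta>}. \<bar>deriv chi x\<bar> \<le> Ceta / \<epsilon>"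
      "\<forall>x\<in>{\<alpha><..<\<beta>}. x \<notin> {\<alpha><..<\<alpha> + 2 * \<epsilon>} \<longrightarrow> chi x = 0 \<and> deriv chi x = 0"
      "(\<integral>x. indicator {\<alpha><..<\<beta>} x * deriv chi x \<partial>lborel) = -1"
      using chi_left[OF ab \<epsilon>pos \<epsilon>2] by blast
    have tr: "AE x in lborel. x \<in> {\<alpha><..<\<alpha> + 2 * \<epsilon>} \<longrightarrow>
        (LINT t:{0<..<T}|lborel. \<bar>v (\<rho> (t, x)) * \<rho> (t, x) - v (\<rho>a t) * \<rho>a t\<bar>) < \<delta>"
      using \<delta>0(2) by eventually_elim (use \<epsilon>1 \<epsilon>2 in auto)
    have J: "\<alpha> \<le> \<alpha>" "\<alpha> \<le> \<alpha> + 2 * \<epsilon>" "\<alpha> + 2 * \<epsilon> \<le> \<beta>" using \<epsilon>pos \<epsilon>2 by auto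
    have nn: "0 \<le> Ceta / \<epsilon>" "0 \<le> \<delta>" "0 \<le> \<bar>Ma\<bar>" using Ceta(1) \<epsilon>pos \<delta>pos by auto
    have E: "\<bar>(LINT z:{0<..<T} \<times> {\<alpha><..<\<beta>}|lborel. \<rho> z * (pdt (tens \<psi> chi) z + v (\<rho> z) * pdx (tens \<psi> chi) z))
          - (-1) * Y\<bar> \<le> \<bar>M\<bar> * \<Psi>1 * T * (\<alpha> + 2 * \<epsilon> - \<alpha>) + \<Psi>0 * (Ceta / \<epsilon>) * \<delta> * (\<alpha> + 2 * \<epsilon> - \<alpha>)"
      unfolding Y_def
      by (rule est[OF ab Tpos vcont rho_meas rho_bd \<psi>(1) P(3)[rule_format] P(4)[rule_format] C(1)
            C(5)[rule_format] C(6)[rule_format] C(7)[rule_format] C(8) J nn(1) P(1) P(2) nn(2) nn(3) ra_meas Ma' tr])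
    have W: "(LINT z:{0<..<T} \<times> {\<alpha><..<\<beta>}|lborel. \<rho> z * (pdt (tens \<psi> chi) z + v (\<rho> z) * pdx (tens \<psi> chi) z)) = X"
      using weak_id[OF \<psi> C(1) C(2)[rule_format]] C(3) C(4) unfolding X_def by simp
    have A1: "\<bar>M\<bar> * \<Psi>1 * T * (\<alpha> + 2 * \<epsilon> - \<alpha>) \<le> e / 2"
    proof -
      have "\<bar>M\<bar> * \<Psi>1 * T * (\<alpha> + 2 * \<epsilon> - \<alpha>) = Q * (2 * \<epsilon>)" unfolding Q_def by simp
      also have "\<dots> \<le> (Q + 1) * (2 * \<epsilon>)" using \<epsilon>pos by simp
      also have "\<dots> \<le> (Q + 1) * (2 * (e / (4 * (Q + 1))))"
        using \<epsilon>3 Q by (intro mult_left_mono) auto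
      also have "\<dots> = e / 2" using Q by (simp add: field_simps)
      finally show ?thesis .
    qed
    have A2: "\<Psi>0 * (Ceta / \<epsilon>) * \<delta> * (\<alpha> + 2 * \<epsilon> - \<alpha>) \<le> e / 2"
    proof -
      have "\<Psi>0 * (Ceta / \<epsilon>) * \<delta> * (\<alpha> + 2 * \<epsilon> - \<alpha>) = \<Psi>0 * e / (2 * R)"
        unfolding \<delta>_def using \<epsilon>pos Ceta(1) Rpos by (simp add: field_simps)
      also have "\<dots> \<le> R * e / (2 * R)"
        using R0 Rpos e by (intro divide_right_mono mult_right_mono) auto
      also have "\<dots> = e / 2" using Rpos by simp
      finally show ?thesis .
    qed
    show ?thesis using E W A1 A2 by simp
  qed
  then have "X + Y = 0" by (intro eps_zero)
  then show ?thesis unfolding X_def Y_def by linarith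
qed

lemma right_id:
  assumes \<psi>: "smooth1 \<psi>" "0 < c" "d < T" "\<And>t. t \<notin> {c..d} \<Longrightarrow> \<psi> t = 0"
  shows "(LINT t:{0<..<T}|lborel. \<psi> t * Trb t) = (LINT t:{0<..<T}|lborel. \<psi> t * (v (\<rho>b t) * \<rho>b t))"
proof -
  define X where "X = (LINT t:{0<..<T}|lborel. \<psi> t * Trb t)"
  define Y where "Y = (LINT t:{0<..<T}|lborel. \<psi> t * (v (\<rho>b t) * \<rho>b t))"
  obtain \<Psi>0 \<Psi>1 where P: "0 \<le> \<Psi>0" "0 \<le> \<Psi>1" "\<forall>t. \<bar>\<psi> t\<bar> \<le> \<Psi>0" "\<forall>t. \<bar>deriv \<psi> t\<bar> \<le> \<Psi>1"
    using psi_bounds[OF \<psi>(1) \<psi>(4)] by blast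
  have rb_meas: "\<rho>b \<in> borel_measurable borel" using sr unfolding strong_trace_right_def Linf_on_def by blast
  obtain Mb where Mb: "AE t in lborel. t \<in> {0<..<T} \<longrightarrow> \<bar>\<rho>b t\<bar> \<le> Mb"
    using sr unfolding strong_trace_right_def Linf_on_def by blast
  have Mb': "AE t in lborel. t \<in> {0<..<T} \<longrightarrow> \<bar>\<rho>b t\<bar> \<le> \<bar>Mb\<bar>"
    using Mb by eventually_elim auto
  have sr2: "\<forall>\<epsilon>>0. \<exists>\<delta>>0. AE y in lborel. \<beta> - \<delta> < y \<and> y < \<beta> \<and> \<alpha> < y \<longrightarrow>
        (LINT t:{0<..<T}|lborel. \<bar>v (\<rho> (t, y)) * \<rho> (t, y) - v (\<rho>b t) * \<rho>b t\<bar>) < \<epsilon>"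
    using sr unfolding strong_trace_right_def by blast
  have "\<bar>X - Y\<bar> \<le> e" if e: "0 < e" for e
  proof -
    define R where "R = \<Psi>0 + 1"
    have Rpos: "0 < R" and R0: "\<Psi>0 \<le> R" unfolding R_def using P(1) by auto
    define \<delta> where "\<delta> = e / (4 * R * Ceta)"
    have \<delta>pos: "0 < \<delta>" using e Ceta(1) Rpos unfolding \<delta>_def by (intro divide_pos_pos mult_pos_pos) auto
    obtain \<delta>0 where \<delta>0: "0 < \<delta>0" "AE y in lborel. \<beta> - \<delta>0 < y \<and> y < \<beta> \<and> \<alpha> < y \<longrightarrow>
        (LINT t:{0<..<T}|lborel. \<bar>v (\<rho> (t, y)) * \<rho> (t, y) - v (\<rho>b t) * \<rho>b t\<bar>) < \<delta>"
      using sr2 \<delta>pos by blast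
    define Q where "Q = \<bar>M\<bar> * \<Psi>1 * T"
    have Q: "0 \<le> Q" unfolding Q_def using P Tpos by simp
    define \<epsilon> where "\<epsilon> = min (min (\<delta>0 / 2) ((\<beta> - \<alpha>) / 2)) (e / (4 * (Q + 1)))"
    have \<epsilon>pos: "0 < \<epsilon>" unfolding \<epsilon>_def using \<delta>0(1) ab e Q by simp
    have m0: "\<epsilon> \<le> min (\<delta>0 / 2) ((\<beta> - \<alpha>) / 2)" unfolding \<epsilon>_def by (rule min.cobounded1)
    have \<epsilon>3: "\<epsilon> \<le> e / (4 * (Q + 1))" unfolding \<epsilon>_def by (rule min.cobounded2)
    have m: "\<epsilon> \<le> \<delta>0 / 2" "\<epsilon> \<le> (\<beta> - \<alpha>) / 2"
      using m0 min.cobounded1[of "\<delta>0 / 2" "(\<beta> - \<alpha>) / 2"] min.cobounded2[of "\<delta>0 / 2" "(\<beta> - \<alpha>) / 2"] by linarith+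
    have \<epsilon>1: "2 * \<epsilon> \<le> \<delta>0" using m(1) by linarith
    have \<epsilon>2: "2 * \<epsilon> \<le> \<beta> - \<alpha>" using m(2) by (simp add: field_simps)
    obtain chi e' f' where C: "smooth1 chi" "\<forall>x. x \<notin> {e'..f'} \<longrightarrow> chi x = 0" "chi \<alpha> = 0" "chi \<beta> = 1"
      "\<forall>x\<in>{\<alpha><..<\<beta>}. \<bar>chi x\<bar> \<le> 1" "\<forall>x\<in>{\<alpha><..<\<beta>}. \<bar>deriv chi x\<bar> \<le> Ceta / \<epsilon>"
      "\<forall>x\<in>{\<alpha><..<\<beta>}. x \<notin> {\<beta> - 2 * \<epsilon><..<\<beta>} \<longrightarrow> chi x = 0 \<and> deriv chi x = 0"
      "(\<integral>x. indicator {\<alpha><..<\<beta>} x * deriv chi x \<partial>lborel) = 1"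
      using chi_right[OF ab \<epsilon>pos \<epsilon>2] by blast
    have tr: "AE x in lborel. x \<in> {\<beta> - 2 * \<epsilon><..<\<beta>} \<longrightarrow>
        (LINT t:{0<..<T}|lborel. \<bar>v (\<rho> (t, x)) * \<rho> (t, x) - v (\<rho>b t) * \<rho>b t\<bar>) < \<delta>"
      using \<delta>0(2) by eventually_elim (use \<epsilon>1 \<epsilon>2 in auto)
    have J: "\<alpha> \<le> \<beta> - 2 * \<epsilon>" "\<beta> - 2 * \<epsilon> \<le> \<beta>" "\<beta> \<le> \<beta>" using \<epsilon>pos \<epsilon>2 by auto
    have nn: "0 \<le> Ceta / \<epsilon>" "0 \<le> \<delta>" "0 \<le> \<bar>Mb\<bar>" using Ceta(1) \<epsilon>pos \<delta>pos by auto
    have E: "\<bar>(LINT z:{0<..<T} \<times> {\<alpha><..<\<beta>}|lborel. \<rho> z * (pdt (tens \<psi> chi) z + v (\<rho> z) * pdx (tens \<psi> chi) z))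
          - 1 * Y\<bar> \<le> \<bar>M\<bar> * \<Psi>1 * T * (\<beta> - (\<beta> - 2 * \<epsilon>)) + \<Psi>0 * (Ceta / \<epsilon>) * \<delta> * (\<beta> - (\<beta> - 2 * \<epsilon>))"
      unfolding Y_def
      by (rule est[OF ab Tpos vcont rho_meas rho_bd \<psi>(1) P(3)[rule_format] P(4)[rule_format] C(1)
            C(5)[rule_format] C(6)[rule_format] C(7)[rule_format] C(8) J nn(1) P(1) P(2) nn(2) nn(3) rb_meas Mb' tr])
    have W: "(LINT z:{0<..<T} \<times> {\<alpha><..<\<beta>}|lborel. \<rho> z * (pdt (tens \<psi> chi) z + v (\<rho> z) * pdx (tens \<psi> chi) z)) = X"
      using weak_id[OF \<psi> C(1) C(2)[rule_format]] C(3) C(4) unfolding X_def by simp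
    have A1: "\<bar>M\<bar> * \<Psi>1 * T * (\<beta> - (\<beta> - 2 * \<epsilon>)) \<le> e / 2"
    proof -
      have "\<bar>M\<bar> * \<Psi>1 * T * (\<beta> - (\<beta> - 2 * \<epsilon>)) = Q * (2 * \<epsilon>)" unfolding Q_def by simp
      also have "\<dots> \<le> (Q + 1) * (2 * \<epsilon>)" using \<epsilon>pos by simp
      also have "\<dots> \<le> (Q + 1) * (2 * (e / (4 * (Q + 1))))"
        using \<epsilon>3 Q by (intro mult_left_mono) auto
      also have "\<dots> = e / 2" using Q by (simp add: field_simps)
      finally show ?thesis .
    qed
    have A2: "\<Psi>0 * (Ceta / \<epsilon>) * \<delta> * (\<beta> - (\<beta> - 2 * \<epsilon>)) \<le> e / 2"
    proof -
      have "\<Psi>0 * (Ceta / \<epsilon>) * \<delta> * (\<beta> - (\<beta> - 2 * \<epsilon>)) = \<Psi>0 * e / (2 * R)"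
        unfolding \<delta>_def using \<epsilon>pos Ceta(1) Rpos by (simp add: field_simps)
      also have "\<dots> \<le> R * e / (2 * R)"
        using R0 Rpos e by (intro divide_right_mono mult_right_mono) auto
      also have "\<dots> = e / 2" using Rpos by simp
      finally show ?thesis .
    qed
    show ?thesis using E W A1 A2 by simp
  qed
  then have "X - Y = 0" by (intro eps_zero)
  then show ?thesis unfolding X_def Y_def by linarith
qed

end


theorem lemma2p13:
  fixes \<alpha> \<beta> T :: real and v :: "real \<Rightarrow> real" and \<rho> :: "real \<times> real \<Rightarrow> real"
    and \<rho>a \<rho>b Tra Trb \<rho>0 :: "real \<Rightarrow> real"
  assumes "\<alpha> < \<beta>" and "0 < T"
    and "v C1_differentiable_on UNIV"
    and "Linf_on ({0<..<T} \<times> {\<alpha><..<\<beta>}) \<rho>"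
    and "entropy_sol v T \<alpha> \<beta> \<rho>"
    and "strong_trace_left v T \<alpha> \<beta> \<rho> \<rho>a"
    and "strong_trace_right v T \<alpha> \<beta> \<rho> \<rho>b"
    and "weak_traces v T \<alpha> \<beta> \<rho> Tra Trb \<rho>0"
  shows "AE t in lborel. t \<in> {0<..<T} \<longrightarrow>
           v (\<rho>a t) * \<rho>a t = - Tra t \<and> v (\<rho>b t) * \<rho>b t = Trb t"
proof -
  have rho_meas: "\<rho> \<in> borel_measurable borel" using assms(4) unfolding Linf_on_def by blast
  obtain M where rho_bd: "AE z in lborel. z \<in> {0<..<T} \<times> {\<alpha><..<\<beta>} \<longrightarrow> \<bar>\<rho> z\<bar> \<le> M"
    using assms(4) unfolding Linf_on_def by blast
  have vcont: "continuous_on UNIV v" using assms(3) by (rule C1_differentiable_imp_continuous_on)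
  have fcont: "continuous_on UNIV (\<lambda>u. v u * u)"
    by (intro continuous_intros continuous_on_subset[OF vcont]) auto
  have [measurable]: "v \<in> borel_measurable borel" by (rule borel_measurable_continuous_onI[OF vcont])
  note ctx = assms(1) assms(2) vcont rho_meas rho_bd assms(8) assms(6) assms(7)
  have TraL: "Linf_on {0<..<T} Tra" and TrbL: "Linf_on {0<..<T} Trb"
    using assms(8) unfolding weak_traces_def by auto
  have raL: "Linf_on {0<..<T} \<rho>a" using assms(6) unfolding strong_trace_left_def by auto
  have rbL: "Linf_on {0<..<T} \<rho>b" using assms(7) unfolding strong_trace_right_def by auto
  have gen: "AE t in lborel. t \<in> {0<..<T} \<longrightarrow> Tr t + s * (v (r t) * r t) = 0"
    if TrL: "Linf_on {0<..<T} Tr" and rL: "Linf_on {0<..<T} r"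
      and id: "\<And>\<psi> c d. smooth1 \<psi> \<Longrightarrow> 0 < c \<Longrightarrow> d < T \<Longrightarrow> (\<And>t. t \<notin> {c..d} \<Longrightarrow> \<psi> t = 0) \<Longrightarrow>
        (LINT t:{0<..<T}|lborel. \<psi> t * Tr t) = - s * (LINT t:{0<..<T}|lborel. \<psi> t * (v (r t) * r t))"
    for Tr r :: "real \<Rightarrow> real" and s :: real
  proof -
    have [measurable]: "Tr \<in> borel_measurable borel" "r \<in> borel_measurable borel"
      using TrL rL unfolding Linf_on_def by auto
    obtain K1 where K1: "AE t in lborel. t \<in> {0<..<T} \<longrightarrow> \<bar>Tr t\<bar> \<le> K1"
      using TrL unfolding Linf_on_def by blast
    obtain K2 where K2: "AE t in lborel. t \<in> {0<..<T} \<longrightarrow> \<bar>r t\<bar> \<le> K2"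
      using rL unfolding Linf_on_def by blast
    obtain Fb where Fb: "0 \<le> Fb" "\<forall>u. \<bar>u\<bar> \<le> \<bar>K2\<bar> \<longrightarrow> \<bar>v u * u\<bar> \<le> Fb"
      using cont_bound_interval[OF fcont, of "\<bar>K2\<bar>"] by auto
    define q where "q t = s * (v (r t) * r t)" for t
    have [measurable]: "q \<in> borel_measurable borel" unfolding q_def[abs_def] by measurable
    have qb: "AE t in lborel. t \<in> {0<..<T} \<longrightarrow> \<bar>q t\<bar> \<le> \<bar>s\<bar> * Fb"
      using K2
    proof eventually_elim
      case (elim t)
      show ?case
      proof
        assume "t \<in> {0<..<T}"
        then have "\<bar>v (r t) * r t\<bar> \<le> Fb" using elim Fb(2) by auto
        then show "\<bar>q t\<bar> \<le> \<bar>s\<bar> * Fb" unfolding q_def by (simp add: abs_mult mult_left_mono)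
      qed
    qed
    have gb: "AE t in lborel. t \<in> {0<..<T} \<longrightarrow> \<bar>Tr t + q t\<bar> \<le> K1 + \<bar>s\<bar> * Fb"
      using K1 qb by eventually_elim (auto intro: order.trans[OF abs_triangle_ineq] add_mono)
    show ?thesis
    proof (rule AE_mp[OF dBR[OF _ gb assms(2)]])
      show "(\<lambda>t. Tr t + q t) \<in> borel_measurable borel" by measurable
      show "AE t in lborel. (t \<in> {0<..<T} \<longrightarrow> Tr t + q t = 0) \<longrightarrow> t \<in> {0<..<T} \<longrightarrow> Tr t + s * (v (r t) * r t) = 0"
        by (intro AE_I2) (simp add: q_def)
    next
      fix \<psi> :: "real \<Rightarrow> real" and c d :: real
      assume \<psi>: "smooth1 \<psi>" "0 < c" "d < T" "\<And>t. t \<notin> {c..d} \<Longrightarrow> \<psi> t = 0"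
      obtain \<Psi>0 \<Psi>1 where P: "0 \<le> \<Psi>0" "\<forall>t. \<bar>\<psi> t\<bar> \<le> \<Psi>0"
        using psi_bounds[OF \<psi>(1) \<psi>(4)] by blast
      have [measurable]: "\<psi> \<in> borel_measurable borel"
        by (rule borel_measurable_continuous_onI[OF smooth1_cont[OF \<psi>(1)]])
      have "(LINT t:{0<..<T}|lborel. \<psi> t * (Tr t + q t)) = (LINT t:{0<..<T}|lborel. \<psi> t * Tr t) + (LINT t:{0<..<T}|lborel. \<psi> t * q t)"
        by (rule set_int_split[OF _ _ _ _ _ P(2)[rule_format] K1 qb]) (use assms(2) in auto)
      also have "(LINT t:{0<..<T}|lborel. \<psi> t * q t) = s * (LINT t:{0<..<T}|lborel. \<psi> t * (v (r t) * r t))"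
      proof -
        have "(\<lambda>t. indicator {0<..<T} t *\<^sub>R (\<psi> t * q t)) = (\<lambda>t. s * (indicator {0<..<T} t *\<^sub>R (\<psi> t * (v (r t) * r t))))"
          by (rule ext) (simp add: q_def)
        then show ?thesis unfolding set_lebesgue_integral_def by (simp only: integral_mult_right_zero)
      qed
      finally show "(LINT t:{0<..<T}|lborel. \<psi> t * (Tr t + q t)) = 0" using id[OF \<psi>] by simp
    qed
  qed
  have A: "AE t in lborel. t \<in> {0<..<T} \<longrightarrow> Tra t + 1 * (v (\<rho>a t) * \<rho>a t) = 0"
    by (rule gen[OF TraL raL]) (use left_id[OF ctx] in simp)
  have B: "AE t in lborel. t \<in> {0<..<T} \<longrightarrow> Trb t + (-1) * (v (\<rho>b t) * \<rho>b t) = 0"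
    by (rule gen[OF TrbL rbL]) (use right_id[OF ctx] in simp)
  from A B show ?thesis by eventually_elim auto
qed


end
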